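(* Let $W$ be a symmetric, singular channel with $R_{\mathrm{cr}}<C(W)$ and no all-zero column, let $R_\infty<R<C(W)$, $\bar R=\frac{R+R_\infty}{2}$, fix $k>0$ and set $R_N=R-\frac kN$. Fix $x_{\mathrm o}\in\mathcal{X}$ and let $\mathbf{x}_{\mathrm o}^N$ be the all-$x_{\mathrm o}$ sequence. Let $\psi_1\in\mathcal{X}$ and $\psi_n:\mathcal{Y}^{n-1}\to\mathcal{X}$ for $n=2,\dots,N$ be arbitrary. (i) For every $r>0$, $\sum_{\mathbf{y}^N\in\mathcal{S}(r)}W(y_1|\psi_1)\prod_{n=2}^NW(y_n|\psi_n(\mathbf{y}^{n-1}))=W\{\mathcal{S}(r)\mid\mathbf{x}_{\mathrm o}^N\}$. (ii) There is a constant $\tilde K>0$ (depending on $R,\bar R$ and $W$) such that for all sufficiently large $N$, $$W\{\mathcal{S}(R_N)\mid\mathbf{x}_{\mathrm o}^N\}\ge\frac{\tilde K}{\sqrt N}\exp\{-N\,\mathrm{E}_{\mathrm{SP}}(R)\}>0.$$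
   Context: $\mathcal{X},\mathcal{Y}$ finite; memoryless channel. Symmetric (Gallager): outputs partitionable into subsets within each of which every row of the transition submatrix is a permutation of every other row and every column of every other column. Singular: $W(y|x)W(y|z)>0$ implies $W(y|x)=W(y|z)$. $\alpha_y=\sum_{x:W(y|x)>0}\frac1{|\mathcal{X}|}$ and $\mathcal{S}(r)=\{\mathbf{y}^N\in\mathcal{Y}^N:\frac1N\sum_{n=1}^N\ln\frac1{\alpha_{y_n}}\le r\}$. $\mathrm{E}_{\mathrm{SP}}(R)=\max_Q\min_{V:I(Q;V)\le R}D(V\|W|Q)$; $R_\infty$ the largest rate below which $\mathrm{E}_{\mathrm{SP}}=\infty$; $R_{\mathrm{cr}}$ the critical rate; $C(W)$ the capacity. *)

theory Defs
  imports "HOL-Analysis.Analysis" "HOL-Library.Disjoint_Sets" "HOL-Library.Extended_Real"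
begin

text \<open>Channels: W x y stands for W(y|x); input alphabet 'x, output alphabet 'y (finite types).\<close>

definition pdist :: "('a::finite \<Rightarrow> real) \<Rightarrow> bool" where
  "pdist Q \<longleftrightarrow> (\<forall>a. Q a \<ge> 0) \<and> (\<Sum>a\<in>UNIV. Q a) = 1"

definition channel :: "('x::finite \<Rightarrow> 'y::finite \<Rightarrow> real) \<Rightarrow> bool" where
  "channel W \<longleftrightarrow> (\<forall>x. pdist (W x))"

definition gallager_symmetric :: "('x::finite \<Rightarrow> 'y::finite \<Rightarrow> real) \<Rightarrow> bool" where
  "gallager_symmetric W \<longleftrightarrow>
     (\<exists>P. partition_on (UNIV :: 'y set) P \<and>
        (\<forall>B\<in>P. (\<forall>x x'. \<exists>\<sigma>. bij_betw \<sigma> B B \<and> (\<forall>y\<in>B. W x' y = W x (\<sigma> y))) \<and>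
               (\<forall>y\<in>B. \<forall>y'\<in>B. \<exists>\<pi>. bij \<pi> \<and> (\<forall>x. W x y' = W (\<pi> x) y))))"

definition singular_channel :: "('x::finite \<Rightarrow> 'y::finite \<Rightarrow> real) \<Rightarrow> bool" where
  "singular_channel W \<longleftrightarrow> (\<forall>x z y. W x y * W z y > 0 \<longrightarrow> W x y = W z y)"

definition alpha :: "('x::finite \<Rightarrow> 'y::finite \<Rightarrow> real) \<Rightarrow> 'y \<Rightarrow> real" where
  "alpha W y = real (card {x. W x y > 0}) / real CARD('x)"

definition Sset :: "('x::finite \<Rightarrow> 'y::finite \<Rightarrow> real) \<Rightarrow> nat \<Rightarrow> real \<Rightarrow> 'y list set" where
  "Sset W N r = {ys. length ys = N \<and> (1 / real N) * (\<Sum>n<N. ln (1 / alpha W (ys ! n))) \<le> r}"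

definition prob_const :: "('x::finite \<Rightarrow> 'y::finite \<Rightarrow> real) \<Rightarrow> nat \<Rightarrow> 'x \<Rightarrow> 'y list set \<Rightarrow> real" where
  "prob_const W N x A = (\<Sum>ys\<in>A. \<Prod>n<N. W x (ys ! n))"

definition out_dist :: "('x::finite \<Rightarrow> real) \<Rightarrow> ('x \<Rightarrow> 'y::finite \<Rightarrow> real) \<Rightarrow> 'y \<Rightarrow> real" where
  "out_dist Q V y = (\<Sum>x\<in>UNIV. Q x * V x y)"

definition mutual_info :: "('x::finite \<Rightarrow> real) \<Rightarrow> ('x \<Rightarrow> 'y::finite \<Rightarrow> real) \<Rightarrow> real" where
  "mutual_info Q V = (\<Sum>x\<in>UNIV. \<Sum>y\<in>UNIV.
      (if Q x * V x y > 0 then Q x * V x y * ln (V x y / out_dist Q V y) else 0))"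

definition cond_div :: "('x::finite \<Rightarrow> 'y::finite \<Rightarrow> real) \<Rightarrow> ('x \<Rightarrow> 'y \<Rightarrow> real) \<Rightarrow> ('x \<Rightarrow> real) \<Rightarrow> ereal" where
  "cond_div V W Q = (\<Sum>x\<in>UNIV. \<Sum>y\<in>UNIV.
      (if Q x * V x y = 0 then 0
       else if W x y = 0 then \<infinity>
       else ereal (Q x * V x y * ln (V x y / W x y))))"

definition E_SP :: "('x::finite \<Rightarrow> 'y::finite \<Rightarrow> real) \<Rightarrow> real \<Rightarrow> ereal" where
  "E_SP W R = (SUP Q\<in>{Q. pdist Q}. INF V\<in>{V. channel V \<and> mutual_info Q V \<le> R}. cond_div V W Q)"

text \<open>Random coding exponent (Csiszar-Koerner form), used to define the critical rate.\<close>
definition E_r :: "('x::finite \<Rightarrow> 'y::finite \<Rightarrow> real) \<Rightarrow> real \<Rightarrow> ereal" where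
  "E_r W R = (SUP Q\<in>{Q. pdist Q}. INF V\<in>{V. channel V}.
               cond_div V W Q + ereal (max 0 (mutual_info Q V - R)))"

definition capacity :: "('x::finite \<Rightarrow> 'y::finite \<Rightarrow> real) \<Rightarrow> real" where
  "capacity W = (SUP Q\<in>{Q. pdist Q}. mutual_info Q W)"

definition R_inf :: "('x::finite \<Rightarrow> 'y::finite \<Rightarrow> real) \<Rightarrow> real" where
  "R_inf W = Sup {R. E_SP W R = \<infinity>}"

definition R_cr :: "('x::finite \<Rightarrow> 'y::finite \<Rightarrow> real) \<Rightarrow> real" where
  "R_cr W = Inf {R. E_r W R = E_SP W R}"

end

theory Submission
  imports Defs
begin
definition opr :: "'i set \<Rightarrow> ('i \<Rightarrow> real) \<Rightarrow> ('i \<Rightarrow> real) \<Rightarrow> (real \<Rightarrow> real) \<Rightarrow> real \<Rightarrow> real" where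
  "opr I p a G s = (\<Sum>i\<in>I. p i * G (s + a i))"

lemma opr_mono:
  assumes "\<forall>i\<in>I. p i \<ge> 0" "\<And>t. G t \<le> H t"
  shows "opr I p a G s \<le> opr I p a H s"
  unfolding opr_def by (rule sum_mono) (simp add: assms mult_left_mono)

lemma oprpow_mono:
  assumes "\<forall>i\<in>I. p i \<ge> 0" "\<And>t. G t \<le> H t"
  shows "(opr I p a ^^ n) G s \<le> (opr I p a ^^ n) H s"
  using assms(2)
proof (induction n arbitrary: s)
  case 0 then show ?case by simp
next
  case (Suc n)
  then show ?case by (simp, intro opr_mono assms(1)) (use Suc in auto)
qed

lemma opr_lin: "opr I p a (\<lambda>t. c * G t + d * H t) s = c * opr I p a G s + d * opr I p a H s"
  unfolding opr_def by (simp add: sum.distrib sum_distrib_left algebra_simps)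

lemma opr_sum: "opr I p a (\<lambda>t. \<Sum>j\<in>S. f j t) s = (\<Sum>j\<in>S. opr I p a (f j) s)"
  unfolding opr_def by (simp add: sum_distrib_left sum.swap[of _ I])

lemma opr_scale: "opr I p a (\<lambda>t. c * G t) s = c * opr I p a G s"
  unfolding opr_def by (simp add: sum_distrib_left algebra_simps)

lemma oprpow_sum: "(opr I p a ^^ n) (\<lambda>t. \<Sum>j\<in>S. f j t) s = (\<Sum>j\<in>S. (opr I p a ^^ n) (f j) s)"
proof (induction n arbitrary: s)
  case 0 then show ?case by simp
next
  case (Suc n)
  have e: "(opr I p a ^^ n) (\<lambda>t. \<Sum>j\<in>S. f j t) = (\<lambda>t. \<Sum>j\<in>S. (opr I p a ^^ n) (f j) t)"
    using Suc by (simp add: fun_eq_iff)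
  have "(opr I p a ^^ Suc n) (\<lambda>t. \<Sum>j\<in>S. f j t) s = opr I p a (\<lambda>t. \<Sum>j\<in>S. (opr I p a ^^ n) (f j) t) s"
    by (simp add: e)
  also have "\<dots> = (\<Sum>j\<in>S. (opr I p a ^^ Suc n) (f j) s)" by (simp add: opr_sum)
  finally show ?case .
qed

lemma oprpow_lin: "(opr I p a ^^ n) (\<lambda>t. c * G t + d * H t) s = c * (opr I p a ^^ n) G s + d * (opr I p a ^^ n) H s"
proof (induction n arbitrary: s)
  case 0 then show ?case by simp
next
  case (Suc n)
  have e: "(opr I p a ^^ n) (\<lambda>t. c * G t + d * H t) = (\<lambda>t. c * (opr I p a ^^ n) G t + d * (opr I p a ^^ n) H t)"
    using Suc by (simp add: fun_eq_iff)
  have "(opr I p a ^^ Suc n) (\<lambda>t. c * G t + d * H t) s = opr I p a (\<lambda>t. c * (opr I p a ^^ n) G t + d * (opr I p a ^^ n) H t) s"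
    by (simp add: e)
  also have "\<dots> = c * (opr I p a ^^ Suc n) G s + d * (opr I p a ^^ Suc n) H s" by (simp add: opr_lin)
  finally show ?case .
qed

lemma oprpow_scale: "(opr I p a ^^ n) (\<lambda>t. c * G t) s = c * (opr I p a ^^ n) G s"
  using oprpow_lin[where I=I and p=p and a=a and n=n and c=c and G=G and d=0 and H=G and s=s] by simp

lemma opr_const: assumes "(\<Sum>i\<in>I. p i) = 1" shows "opr I p a (\<lambda>t. c) s = c"
  unfolding opr_def using assms by (simp add: sum_distrib_right[symmetric])

lemma oprpow_const: assumes "(\<Sum>i\<in>I. p i) = 1" shows "(opr I p a ^^ n) (\<lambda>t. c) s = c"
proof (induction n arbitrary: s)
  case 0 then show ?case by simp
next
  case (Suc n)
  have "(opr I p a ^^ n) (\<lambda>t. c) = (\<lambda>t. c)" using Suc by (simp add: fun_eq_iff)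
  then show ?case using opr_const[OF assms] by simp
qed

lemma opr_comm: "opr I p a (opr J q b G) s = opr J q b (opr I p a G) s"
  unfolding opr_def by (simp add: sum_distrib_left sum.swap[of _ I] algebra_simps)

lemma oprpow_comm1: "(opr I p a ^^ n) (opr J q b G) s = opr J q b ((opr I p a ^^ n) G) s"
proof (induction n arbitrary: s G)
  case 0 then show ?case by simp
next
  case (Suc n)
  have e: "(opr I p a ^^ n) (opr J q b G) = (\<lambda>t. opr J q b ((opr I p a ^^ n) G) t)"
    using Suc by (simp add: fun_eq_iff)
  have "(opr I p a ^^ Suc n) (opr J q b G) s = opr I p a (\<lambda>t. opr J q b ((opr I p a ^^ n) G) t) s"
    by (simp add: e)
  also have "\<dots> = opr J q b ((opr I p a ^^ Suc n) G) s"
    using opr_comm[of I p a J q b "(opr I p a ^^ n) G" s] by (simp add: eta_contract_eq)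
  finally show ?case .
qed

lemma oprpow_comm: "(opr I p a ^^ n) ((opr J q b ^^ m) G) s = (opr J q b ^^ m) ((opr I p a ^^ n) G) s"
proof (induction m arbitrary: s G)
  case 0 then show ?case by simp
next
  case (Suc m)
  have "(opr I p a ^^ n) ((opr J q b ^^ Suc m) G) s = opr J q b ((opr I p a ^^ n) ((opr J q b ^^ m) G)) s"
    by (simp add: oprpow_comm1)
  also have "\<dots> = opr J q b ((opr J q b ^^ m) ((opr I p a ^^ n) G)) s"
  proof -
    have "(opr I p a ^^ n) ((opr J q b ^^ m) G) = (opr J q b ^^ m) ((opr I p a ^^ n) G)"
      using Suc by (simp add: fun_eq_iff)
    then show ?thesis by simp
  qed
  finally show ?case by simp
qed

lemma pascal_sum:
  fixes f :: "nat \<Rightarrow> real"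
  shows "(\<Sum>M\<le>Suc N. real (Suc N choose M) * f M) = (\<Sum>M\<le>N. real (N choose M) * f M) + (\<Sum>M\<le>N. real (N choose M) * f (Suc M))"
proof -
  have "(\<Sum>M\<le>Suc N. real (Suc N choose M) * f M) = f 0 + (\<Sum>M\<le>N. real (Suc N choose Suc M) * f (Suc M))"
    by (subst sum.atMost_Suc_shift) simp
  also have "\<dots> = f 0 + (\<Sum>M\<le>N. real (N choose Suc M) * f (Suc M)) + (\<Sum>M\<le>N. real (N choose M) * f (Suc M))"
    by (simp add: sum.distrib algebra_simps)
  also have "f 0 + (\<Sum>M\<le>N. real (N choose Suc M) * f (Suc M)) = (\<Sum>M\<le>N. real (N choose M) * f M)"
  proof (cases N)
    case 0 then show ?thesis by simp
  next
    case (Suc N')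
    have "(\<Sum>M\<le>N. real (N choose M) * f M) = f 0 + (\<Sum>M\<le>N'. real (N choose Suc M) * f (Suc M))"
      unfolding Suc by (subst sum.atMost_Suc_shift) simp
    also have "(\<Sum>M\<le>N'. real (N choose Suc M) * f (Suc M)) = (\<Sum>M\<le>N. real (N choose Suc M) * f (Suc M))"
      unfolding Suc by (simp add: sum.atMost_Suc binomial_eq_0)
    finally show ?thesis by simp
  qed
  finally show ?thesis .
qed

lemma binom_expand:
  assumes T: "\<And>G s. T G s = c1 * opr I p a G s + c2 * opr J q b G s"
  shows "(T ^^ N) G s = (\<Sum>M\<le>N. real (N choose M) * c1^(N-M) * c2^M * (opr I p a ^^ (N-M)) ((opr J q b ^^ M) G) s)"
proof (induction N arbitrary: s)
  case 0 then show ?case by simp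
next
  case (Suc N)
  let ?X = "\<lambda>i j t. (opr I p a ^^ i) ((opr J q b ^^ j) G) t"
  have eq: "(T ^^ N) G = (\<lambda>t. \<Sum>M\<le>N. real (N choose M) * c1^(N-M) * c2^M * ?X (N-M) M t)"
    using Suc by (simp add: fun_eq_iff)
  have "(T ^^ Suc N) G s = c1 * opr I p a ((T ^^ N) G) s + c2 * opr J q b ((T ^^ N) G) s"
    by (simp add: T)
  also have "opr I p a ((T ^^ N) G) s = (\<Sum>M\<le>N. real (N choose M) * c1^(N-M) * c2^M * ?X (Suc (N-M)) M s)"
    unfolding eq opr_sum by (simp add: opr_scale mult.assoc)
  also have "opr J q b ((T ^^ N) G) s = (\<Sum>M\<le>N. real (N choose M) * c1^(N-M) * c2^M * ?X (N-M) (Suc M) s)"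
    unfolding eq opr_sum
    by (intro sum.cong refl) (simp add: opr_scale oprpow_comm1[symmetric] mult.assoc)
  also have "c1 * (\<Sum>M\<le>N. real (N choose M) * c1^(N-M) * c2^M * ?X (Suc (N-M)) M s)
      + c2 * (\<Sum>M\<le>N. real (N choose M) * c1^(N-M) * c2^M * ?X (N-M) (Suc M) s)
      = (\<Sum>M\<le>N. real (N choose M) * (c1^(Suc N-M) * c2^M * ?X (Suc N-M) M s))
      + (\<Sum>M\<le>N. real (N choose M) * (c1^(Suc N-Suc M) * c2^(Suc M) * ?X (Suc N - Suc M) (Suc M) s))"
    unfolding sum_distrib_left
  proof (intro arg_cong2[where f="(+)"] sum.cong refl)
    fix M assume "M \<in> {..N}"
    then have e: "Suc N - M = Suc (N - M)" by auto
    show "c1 * (real (N choose M) * c1^(N-M) * c2^M * ?X (Suc (N-M)) M s) =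
        real (N choose M) * (c1^(Suc N-M) * c2^M * ?X (Suc N-M) M s)"
      unfolding e by (simp only: power_Suc mult_ac)
    show "c2 * (real (N choose M) * c1^(N-M) * c2^M * ?X (N-M) (Suc M) s) =
        real (N choose M) * (c1^(Suc N-Suc M) * c2^(Suc M) * ?X (Suc N - Suc M) (Suc M) s)"
      by (simp only: diff_Suc_Suc power_Suc mult_ac)
  qed
  also have "\<dots> = (\<Sum>M\<le>Suc N. real (Suc N choose M) * (c1^(Suc N-M) * c2^M * ?X (Suc N-M) M s))"
    by (rule pascal_sum[symmetric])
  finally show ?case by (simp only: mult.assoc)
qed

lemma opr_quad:
  assumes "(\<Sum>i\<in>I. p i) = 1" "m = (\<Sum>i\<in>I. p i * a i)" "v = (\<Sum>i\<in>I. p i * (a i - m)^2)"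
  shows "opr I p a (\<lambda>t. (t - c)^2) s = (s + m - c)^2 + v"
proof -
  have "opr I p a (\<lambda>t. (t - c)^2) s = (\<Sum>i\<in>I. p i * ((s + m - c)^2 + 2 * (s + m - c) * (a i - m) + (a i - m)^2))"
    unfolding opr_def by (intro sum.cong refl) (simp add: power2_eq_square algebra_simps)
  also have "\<dots> = (s + m - c)^2 * (\<Sum>i\<in>I. p i) + 2 * (s + m - c) * ((\<Sum>i\<in>I. p i * a i) - m * (\<Sum>i\<in>I. p i)) + v"
    by (simp add: assms(3) sum.distrib sum_distrib_left sum_distrib_right sum_subtractf algebra_simps)
  finally show ?thesis using assms(1,2) by simp
qed

lemma oprpow_quad:
  assumes "(\<Sum>i\<in>I. p i) = 1" "m = (\<Sum>i\<in>I. p i * a i)" "v = (\<Sum>i\<in>I. p i * (a i - m)^2)"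
  shows "(opr I p a ^^ n) (\<lambda>t. (t - c)^2) s = (s + n * m - c)^2 + n * v"
proof (induction n arbitrary: s)
  case 0 then show ?case by simp
next
  case (Suc n)
  have e: "(opr I p a ^^ n) (\<lambda>t. (t - c)^2) = (\<lambda>t. 1 * (t - (c - n * m))^2 + (n * v) * 1)"
    using Suc by (simp add: fun_eq_iff algebra_simps)
  have "(opr I p a ^^ Suc n) (\<lambda>t. (t - c)^2) s = opr I p a (\<lambda>t. 1 * (t - (c - n * m))^2 + (n * v) * 1) s"
    by (simp add: e)
  also have "\<dots> = (s + m - (c - n * m))^2 + v + n * v"
    unfolding opr_lin using opr_quad[OF assms] opr_const[OF assms(1)] by simp
  finally show ?case by (simp add: algebra_simps)
qed

lemma oprpow_cheb:
  fixes m v h D :: real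
  assumes p: "\<forall>i\<in>I. p i \<ge> 0" and s1: "(\<Sum>i\<in>I. p i) = 1" and m: "m = (\<Sum>i\<in>I. p i * a i)"
    and v: "v = (\<Sum>i\<in>I. p i * (a i - m)^2)"
    and h: "h \<ge> 0" and D: "D > 0" and G0: "\<And>t. G t \<ge> 0"
    and Gh: "\<And>t. \<bar>t - (s + real n * m)\<bar> \<le> D \<Longrightarrow> G t \<ge> h"
  shows "(opr I p a ^^ n) G s \<ge> h * (1 - real n * v / D^2)"
proof -
  let ?c = "s + real n * m"
  have pt: "h * 1 + (- h / D^2) * (t - ?c)^2 \<le> G t" for t
  proof (cases "\<bar>t - ?c\<bar> \<le> D")
    case True
    have "(- h / D^2) * (t - ?c)^2 \<le> 0" using h D by (simp add: divide_nonpos_pos mult_nonpos_nonneg)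
    then show ?thesis using Gh[OF True] by simp
  next
    case False
    then have "D^2 \<le> (t - ?c)^2" using D by (metis abs_le_square_iff le_less_linear less_imp_le abs_of_pos)
    then have "h * (t - ?c)^2 / D^2 \<ge> h" using h D by (simp add: le_divide_eq mult_left_mono mult.commute)
    then show ?thesis using G0[of t] by (simp add: field_simps)
  qed
  have "(opr I p a ^^ n) (\<lambda>t. h * 1 + (- h / D^2) * (t - ?c)^2) s \<le> (opr I p a ^^ n) G s"
    by (rule oprpow_mono[OF p]) (use pt in auto)
  moreover have "(opr I p a ^^ n) (\<lambda>t. h * 1 + (- h / D^2) * (t - ?c)^2) s = h * (1 - n * v / D^2)"
    unfolding oprpow_lin oprpow_quad[OF s1 m v] oprpow_const[OF s1] by (simp add: field_simps)
  ultimately show ?thesis by simp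
qed

lemma choose_step: "real (Suc k) * real (n choose Suc k) = real (n - k) * real (n choose k)"
proof -
  have "Suc k * (n choose Suc k) = (n - k) * (n choose k)"
    by (metis binomial_absorb_comp binomial_absorption)
  then show ?thesis by (metis of_nat_mult)
qed

lemma aux1: assumes "(x::real) \<ge> 1" shows "1/(4*x) * ((2*x+1)^2 / (4*(x+1)^2)) \<ge> 1/(4*(x+1))"
proof -
  have p: "x > 0" "x + 1 > 0" "16*x*(x+1)^2 > 0" using assms by auto
  have e: "1/(4*x) * ((2*x+1)^2 / (4*(x+1)^2)) = (2*x+1)^2 / (16*x*(x+1)^2)"
    by (simp add: power2_eq_square)
  have e2: "1/(4*(x+1)) * (16*x*(x+1)^2) = 4*x*(x+1)"
    using p by (simp add: power2_eq_square field_simps)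
  have "1/(4*(x+1)) * (16*x*(x+1)^2) \<le> (2*x+1)^2" unfolding e2 by (simp add: power2_eq_square algebra_simps)
  then have "1/(4*(x+1)) \<le> (2*x+1)^2 / (16*x*(x+1)^2)" using p(3) by (simp add: le_divide_eq)
  then show ?thesis using e by simp
qed

lemma cb_even: "n \<ge> 1 \<Longrightarrow> (real ((2*n) choose n) / 4^n)^2 \<ge> 1 / (4 * n)"
proof (induction n rule: dec_induct)
  case base then show ?case by (simp add: numeral_2_eq_2)
next
  case (step n)
  have a: "real (Suc n) * real (Suc (2*n) choose Suc n) = real (Suc (2*n) - n) * real (Suc (2*n) choose n)"
    by (rule choose_step)
  have b: "real (Suc n) * real (Suc (2*n) choose n) = real (2*n + 1) * real ((2*n) choose n)"
  proof -
    have "(Suc (2*n) - n) * (Suc (2*n) choose n) = Suc (2*n) * (Suc (2*n) - 1 choose n)"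
      by (rule binomial_absorb_comp)
    moreover have "Suc (2*n) - n = Suc n" by simp
    ultimately have "Suc n * (Suc (2*n) choose n) = (2*n+1) * ((2*n) choose n)" by simp
    then show ?thesis by (metis of_nat_mult)
  qed
  have c2: "real (Suc n) * real ((2 * Suc n) choose Suc n) = real (2*(2*n+1)) * real ((2*n) choose n)"
  proof -
    have "(2 * Suc n) = Suc (Suc (2*n))" by simp
    then have "real ((2 * Suc n) choose Suc n) = real (Suc (2*n) choose n) + real (Suc (2*n) choose Suc n)"
      by simp
    then have "real (Suc n) * real ((2 * Suc n) choose Suc n) = real (Suc n) * real (Suc (2*n) choose n) + real (Suc n) * real (Suc (2*n) choose Suc n)"
      by (simp add: algebra_simps)
    also have "\<dots> = real (2*n+1) * real ((2*n) choose n) + real (n+1) * real (Suc (2*n) choose n)"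
      using a b by simp
    also have "\<dots> = real (2*(2*n+1)) * real ((2*n) choose n)" using b by simp
    finally show ?thesis .
  qed
  define c where "c = real ((2*n) choose n) / 4^n"
  have cn: "real ((2 * Suc n) choose Suc n) / 4^(Suc n) = c * (2*n+1) / (2*(n+1))"
  proof -
    define X where "X = real ((2 * Suc n) choose Suc n)"
    define Y where "Y = real ((2*n) choose n)"
    have "real (Suc n) * X = real (2*(2*n+1)) * Y" using c2 unfolding X_def Y_def .
    note h = this
    have "X / 4^(Suc n) * (2*(n+1)) = (real (Suc n) * X) / (2 * 4^n)" by (simp add: field_simps)
    also have "\<dots> = real (2*(2*n+1)) * Y / (2*4^n)" by (simp only: h)
    also have "\<dots> = Y/4^n*(2*n+1)" by (simp add: field_simps)
    finally have "X / 4^(Suc n) * (2*(n+1)) = Y/4^n*(2*n+1)" .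
    then have "X / 4^(Suc n) = Y / 4^n * (2*n+1) / (2*(n+1))"
      by (simp add: eq_divide_eq)
    then show ?thesis unfolding X_def Y_def c_def .
  qed
  have "c^2 \<ge> 1/(4*n)" using step c_def by simp
  have npos: "real n \<ge> 1" using step by simp
  have "(c * (2*n+1) / (2*(n+1)))^2 = c^2 * ((2*n+1)^2 / (4 * (n+1)^2))"
    by (simp add: power_divide power_mult_distrib power2_eq_square algebra_simps)
  also have "\<dots> \<ge> 1/(4*n) * ((2*n+1)^2 / (4 * (n+1)^2))"
    by (rule mult_right_mono[OF \<open>c^2 \<ge> 1/(4*n)\<close>]) simp
  finally have "(c * (2*n+1) / (2*(n+1)))^2 \<ge> 1/(4*n) * ((2*n+1)^2 / (4 * (n+1)^2))" .
  moreover have "1/(4*n) * ((2*n+1)^2 / (4 * (n+1)^2)) \<ge> 1 / (4 * real (Suc n))"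
    using aux1[OF npos] by (simp add: add.commute)
  ultimately show ?case using cn by simp
qed

lemma cb_central: assumes "M \<ge> 1" shows "(real (M choose (M div 2)) / 2^M)^2 \<ge> 1 / (16 * M)"
proof (cases "even M")
  case True
  then obtain n where n: "M = 2*n" by auto
  with assms have "n \<ge> 1" by simp
  have "(real (M choose (M div 2)) / 2^M) = real ((2*n) choose n) / 4^n"
    unfolding n by (simp add: power_mult)
  moreover have "1 / (16 * real M) \<le> 1 / (4 * n)" using \<open>n \<ge> 1\<close> n by (simp add: field_simps)
  ultimately show ?thesis using cb_even[OF \<open>n\<ge>1\<close>] by simp
next
  case False
  then obtain n where n: "M = 2*n+1" by (metis oddE)
  have b: "real (Suc n) * real (Suc (2*n) choose n) = real (2*n + 1) * real ((2*n) choose n)"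
  proof -
    have "(Suc (2*n) - n) * (Suc (2*n) choose n) = Suc (2*n) * (Suc (2*n) - 1 choose n)"
      by (rule binomial_absorb_comp)
    moreover have "Suc (2*n) - n = Suc n" by simp
    ultimately have "Suc n * (Suc (2*n) choose n) = (2*n+1) * ((2*n) choose n)" by simp
    then show ?thesis by (metis of_nat_mult)
  qed
  have md: "M div 2 = n" using n by simp
  have eq: "real (M choose (M div 2)) / 2^M = (real ((2*n) choose n) / 4^n) * ((2*n+1) / (2*(n+1)))"
  proof -
    define X where "X = real (Suc (2*n) choose n)"
    define Y where "Y = real ((2*n) choose n)"
    have h: "real (Suc n) * X = real (2*n+1) * Y" using b unfolding X_def Y_def .
    have p2: "(2::real)^M = 2 * 4^n" unfolding n by (simp add: power_mult)
    have "X / 2^M * (2*(n+1)) = (real (Suc n) * X) / 4^n" unfolding p2 by (simp add: field_simps)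
    also have "\<dots> = real (2*n+1) * Y / 4^n" by (simp only: h)
    finally have "X / 2^M * (2*(n+1)) = real (2*n+1) * Y / 4^n" .
    then have "X / 2^M = (real (2*n+1) * Y / 4^n) / (2*(n+1))" by (simp add: eq_divide_eq mult_ac)
    also have "\<dots> = Y / 4^n * ((2*n+1) / (2*(n+1)))" by simp
    finally have "X / 2^M = Y / 4^n * ((2*n+1) / (2*(n+1)))" .
    moreover have "M = Suc (2*n)" using n by simp
    ultimately show ?thesis unfolding md X_def Y_def by simp
  qed
  show ?thesis
  proof (cases "n = 0")
    case True then show ?thesis using n by (simp add: power2_eq_square)
  next
    case False
    then have n1: "n \<ge> 1" by simp
    have f: "(2*n+1) / (2*(n+1)) \<ge> (1/2::real)" by (simp add: field_simps)
    have "(real ((2*n) choose n) / 4^n * ((2*n+1) / (2*(n+1))))^2 \<ge> (real ((2*n) choose n) / 4^n)^2 * (1/2)^2"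
      unfolding power_mult_distrib by (intro mult_left_mono power_mono f) auto
    moreover have "(real ((2*n) choose n) / 4^n)^2 * (1/2)^2 \<ge> 1/(4*n) * (1/4)"
      using cb_even[OF n1] by (simp add: power2_eq_square)
    moreover have "1/(4*n) * (1/4) \<ge> 1 / (16 * real M)" using n n1 by (simp add: field_simps)
    ultimately show ?thesis using eq by simp
  qed
qed

lemma factor_aux: assumes "(M::real) > 0" "2*c \<le> M" "M - 1 \<le> 2*c" "d \<ge> 0" shows "M*(M - c - d) \<ge> (M - 4*(d+1))*(c+d+1)"
proof -
  define P where "P = (d+1)*(d+1)"
  define Q where "Q = M*(M-2*c)"
  define S where "S = (d+1)*c"
  define T where "T = (d+1)*(M-1)"
  define U where "U = d*M"
  have e: "M*(M - c - d) - (M - 4*(d+1))*(c+d+1) = Q - 2*U - M + 4*S + 4*P"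
    unfolding P_def Q_def S_def U_def by (simp add: algebra_simps)
  have T: "T = U + M - d - 1" unfolding T_def U_def by (simp add: algebra_simps)
  have a: "Q \<ge> 0" using assms unfolding Q_def by simp
  have b: "2*S \<ge> T"
  proof -
    have "(d+1)*(M-1) \<le> (d+1)*(2*c)" using assms by (intro mult_left_mono) auto
    then show ?thesis unfolding S_def T_def by (simp add: algebra_simps)
  qed
  have c: "P \<ge> d + 1" using assms unfolding P_def by simp
  show ?thesis using e a b c T assms by linarith
qed
lemma exp_aux: assumes "0 \<le> (x::real)" "x \<le> 1/2" shows "exp(-2*x) \<le> 1 - x"
proof -
  have "1 + 2*x \<le> exp (2*x)" by (rule exp_ge_add_one_self)
  then have "exp(-2*x) \<le> 1/(1+2*x)" using assms by (simp add: exp_minus field_simps)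
  also have "1/(1+2*x) \<le> 1 - x"
  proof -
    have "1 \<le> (1-x)*(1+2*x)" 
    proof -
      have "x * (2*x) \<le> x * 1" using assms by (intro mult_left_mono) auto
      then show ?thesis by (simp add: algebra_simps)
    qed
    then show ?thesis using assms by (simp add: divide_le_eq)
  qed
  finally show ?thesis .
qed

lemma binom_ratio:
  assumes c0: "c0 = M div 2"
  shows "8*d \<le> M \<Longrightarrow> real (M choose (c0+d)) \<ge> real (M choose c0) * exp(-4*real d*(real d+1)/real M)"
proof (induction d)
  case 0 then show ?case by simp
next
  case (Suc d)
  have Mpos: "real M > 0" using Suc.prems by simp
  have "8*d \<le> M" using Suc.prems by simp
  then have IH: "real (M choose (c0+d)) \<ge> real (M choose c0) * exp(-4*real d*(real d+1)/real M)" by (rule Suc.IH)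
  have cs: "real (Suc (c0+d)) * real (M choose Suc (c0+d)) = real (M - (c0+d)) * real (M choose (c0+d))"
    by (rule choose_step)
  have le: "c0 + d \<le> M" using Suc.prems c0 by (simp add: div_le_dividend)
  have c0r: "2 * real c0 \<le> M" "real M - 1 \<le> 2 * real c0" using c0 by linarith+
  define x where "x = 4*(real d+1)/M"
  have x0: "0 \<le> x" "x \<le> 1/2" unfolding x_def using Suc.prems Mpos by (auto simp: field_simps)
  have fa: "real M * (real M - real c0 - real d) \<ge> (real M - 4*(real d+1)) * (real c0 + real d + 1)"
    by (rule factor_aux[OF Mpos c0r]) simp
  have "real (M - (c0+d)) = real M - real c0 - real d" using le by simp
  also have "\<dots> \<ge> (1 - x) * real (Suc (c0+d))"
  proof -
    have "(1 - x) * real (Suc (c0+d)) = (real M - 4*(real d+1)) * (real c0 + real d + 1) / M"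
      unfolding x_def using Mpos by (simp add: field_simps)
    also have "\<dots> \<le> real M - real c0 - real d" using fa Mpos by (simp add: divide_le_eq mult.commute)
    finally show ?thesis .
  qed
  finally have fac: "real (M - (c0+d)) \<ge> (1 - x) * real (Suc (c0+d))" .
  have "real (M choose Suc (c0+d)) = real (M - (c0+d)) * real (M choose (c0+d)) / real (Suc (c0+d))"
    using cs by (simp add: eq_divide_eq mult.commute)
  also have "\<dots> \<ge> (1 - x) * real (M choose (c0+d))"
  proof -
    have "(1 - x) * real (Suc (c0+d)) * real (M choose (c0+d)) \<le> real (M - (c0+d)) * real (M choose (c0+d))"
      using fac by (rule mult_right_mono) simp
    then have "(1 - x) * real (M choose (c0+d)) * real (Suc (c0+d)) \<le> real (M - (c0+d)) * real (M choose (c0+d))"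
      by (simp add: mult_ac)
    then show ?thesis by (simp add: le_divide_eq del: of_nat_Suc)
  qed
  finally have s1: "real (M choose Suc (c0+d)) \<ge> (1 - x) * real (M choose (c0+d))" .
  have "(1 - x) * real (M choose (c0+d)) \<ge> exp(-2*x) * (real (M choose c0) * exp(-4*real d*(real d+1)/real M))"
    using exp_aux[OF x0] IH x0 by (intro mult_mono) auto
  also have "exp(-2*x) * (real (M choose c0) * exp(-4*real d*(real d+1)/real M)) = real (M choose c0) * exp(-4*real (Suc d)*(real (Suc d)+1)/real M)"
  proof -
    have "-2*x + -4*real d*(real d+1)/real M = -4*real (Suc d)*(real (Suc d)+1)/real M"
      unfolding x_def using Mpos by (simp add: field_simps)
    then show ?thesis by (simp add: exp_add[symmetric] mult_ac)
  qed
  finally show ?case using s1 by simp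
qed

lemma central_sqrt: assumes "M \<ge> 1" shows "real (M choose (M div 2)) / 2^M \<ge> 1 / (4 * sqrt M)"
proof -
  have "sqrt (1 / (16 * real M)) \<le> sqrt ((real (M choose (M div 2)) / 2^M)^2)"
    using cb_central[OF assms] by (rule real_sqrt_le_mono)
  moreover have "sqrt (1 / (16 * real M)) = 1 / (4 * sqrt M)"
    by (simp add: real_sqrt_divide real_sqrt_mult)
  ultimately show ?thesis by simp
qed

lemma binom_lb:
  assumes M1: "M \<ge> 1" and j: "j \<le> M" and dj: "\<bar>real j - M/2\<bar> \<le> d" and d8: "8*(d+1) \<le> M"
  shows "real (M choose j) / 2^M \<ge> exp(-4*(d+1)*(d+2)/M) / (4 * sqrt M)"
proof -
  define c0 where "c0 = M div 2"
  have c0r: "2 * real c0 \<le> M" "real M - 1 \<le> 2 * real c0" using c0_def by linarith+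
  have d0: "d \<ge> 0" using dj by linarith
  have Mpos: "real M > 0" using M1 by simp
  obtain e where e: "real e \<le> d + 1" "real (M choose j) = real (M choose (c0+e))"
  proof (cases "c0 \<le> j")
    case True
    show ?thesis by (rule that[of "j - c0"]) (use True dj c0r in auto)
  next
    case False
    have sym: "M choose j = M choose (M - j)" using j by (rule binomial_symmetric)
    have "2*c0 \<le> M" unfolding c0_def by simp
    then have eq: "M - j = c0 + (M - j - c0)" using False j by simp
    show ?thesis
    proof (rule that[of "M - j - c0"])
      have "real (M - j - c0) = real M - real j - real c0" using eq j by linarith
      then show "real (M - j - c0) \<le> d + 1" using False dj c0r by auto
      show "real (M choose j) = real (M choose (c0 + (M - j - c0)))" using sym eq by simp
    qed
  qed
  have e8: "8 * e \<le> M"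
  proof -
    have "8 * real e \<le> M" using e(1) d8 by (smt (verit))
    then show ?thesis by linarith
  qed
  have r: "real (M choose (c0+e)) \<ge> real (M choose c0) * exp(-4*real e*(real e+1)/real M)"
    by (rule binom_ratio[OF c0_def e8])
  have ee: "real e * (real e + 1) \<le> (d+1) * (d+2)" using e(1) d0
    by (intro mult_mono) auto
  have ex: "exp(-4*(d+1)*(d+2)/M) \<le> exp(-4*real e*(real e+1)/real M)"
  proof -
    have "4*(real e*(real e+1))/M \<le> 4*((d+1)*(d+2))/M" using ee Mpos by (intro divide_right_mono) auto
    moreover have "-4*(d+1)*(d+2)/real M = -(4*((d+1)*(d+2))/M)" using Mpos by (simp add: field_simps)
    moreover have "-4*real e*(real e+1)/real M = -(4*(real e*(real e+1))/M)" using Mpos by (simp add: field_simps)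
    ultimately show ?thesis by simp
  qed
  have cen: "real (M choose c0) / 2^M \<ge> 1 / (4 * sqrt M)" unfolding c0_def by (rule central_sqrt[OF M1])
  have "exp(-4*(d+1)*(d+2)/M) / (4 * sqrt M) \<le> exp(-4*real e*(real e+1)/real M) * (real (M choose c0) / 2^M)"
  proof -
    have "exp(-4*(d+1)*(d+2)/M) / (4 * sqrt M) = exp(-4*(d+1)*(d+2)/M) * (1 / (4 * sqrt M))" by simp
    also have "\<dots> \<le> exp(-4*real e*(real e+1)/real M) * (real (M choose c0) / 2^M)"
      using ex cen by (intro mult_mono) auto
    finally show ?thesis .
  qed
  also have "\<dots> \<le> real (M choose j) / 2^M"
    using r e(2) by (simp add: divide_right_mono mult.commute)
  finally show ?thesis .
qed

definition shiftop :: "real \<Rightarrow> (real \<Rightarrow> real) \<Rightarrow> real \<Rightarrow> real" where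
  "shiftop c = opr {()} (\<lambda>_. 1) (\<lambda>_. c)"

lemma shift_pow: "(shiftop c ^^ n) G s = G (s + real n * c)"
proof (induction n arbitrary: s)
  case 0 then show ?case by simp
next
  case (Suc n)
  have e: "(shiftop c ^^ n) G = (\<lambda>t. G (t + real n * c))" using Suc by (simp add: fun_eq_iff)
  show ?case unfolding funpow.simps(2) o_apply e by (simp add: shiftop_def opr_def algebra_simps)
qed

definition twop :: "real \<Rightarrow> real \<Rightarrow> (real \<Rightarrow> real) \<Rightarrow> real \<Rightarrow> real" where
  "twop u v = opr (UNIV :: bool set) (\<lambda>_. 1/2) (\<lambda>b. if b then v else u)"

lemma twop_mix: "twop u v G s = (1/2) * opr {()} (\<lambda>_. 1) (\<lambda>_. u) G s + (1/2) * opr {()} (\<lambda>_. 1) (\<lambda>_. v) G s"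
  by (simp add: twop_def opr_def UNIV_bool)

lemma twop_pow: "(twop u v ^^ M) G s = (\<Sum>j\<le>M. real (M choose j) / 2^M * G (s + real (M - j) * u + real j * v))"
proof -
  have "(twop u v ^^ M) G s = (\<Sum>j\<le>M. real (M choose j) * (1/2)^(M-j) * (1/2)^j *
      (opr {()} (\<lambda>_. 1) (\<lambda>_. u) ^^ (M-j)) ((opr {()} (\<lambda>_. 1) (\<lambda>_. v) ^^ j) G) s)"
    by (rule binom_expand) (rule twop_mix)
  also have "\<dots> = (\<Sum>j\<le>M. real (M choose j) / 2^M * G (s + real (M - j) * u + real j * v))"
  proof (intro sum.cong refl)
    fix j assume "j \<in> {..M}"
    then have "(1/2::real)^(M-j) * (1/2)^j = 1/2^M"
      by (simp add: power_add[symmetric] power_one_over)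
    moreover have "(opr {()} (\<lambda>_. 1) (\<lambda>_. u) ^^ (M-j)) ((opr {()} (\<lambda>_. 1) (\<lambda>_. v) ^^ j) G) s
        = G (s + real (M - j) * u + real j * v)"
      using shift_pow[unfolded shiftop_def] by simp
    ultimately show "real (M choose j) * (1/2)^(M-j) * (1/2)^j *
      (opr {()} (\<lambda>_. 1) (\<lambda>_. u) ^^ (M-j)) ((opr {()} (\<lambda>_. 1) (\<lambda>_. v) ^^ j) G) s
      = real (M choose j) / 2^M * G (s + real (M - j) * u + real j * v)"
      by (simp add: mult.assoc)
  qed
  finally show ?thesis .
qed

definition bern :: "real \<Rightarrow> (real \<Rightarrow> real) \<Rightarrow> real \<Rightarrow> real" where
  "bern r = opr (UNIV :: bool set) (\<lambda>b. if b then r else 1 - r) (\<lambda>b. if b then 1 else 0)"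

lemma bern_pow: "(bern r ^^ N) G 0 = (\<Sum>M\<le>N. real (N choose M) * (1-r)^(N-M) * r^M * G (real M))"
proof -
  have mix: "bern r G s = (1-r) * opr {()} (\<lambda>_. 1) (\<lambda>_. 0) G s + r * opr {()} (\<lambda>_. 1) (\<lambda>_. 1) G s" for G s
    by (simp add: bern_def opr_def UNIV_bool)
  have "(bern r ^^ N) G 0 = (\<Sum>M\<le>N. real (N choose M) * (1-r)^(N-M) * r^M *
      (opr {()} (\<lambda>_. 1) (\<lambda>_. 0) ^^ (N-M)) ((opr {()} (\<lambda>_. 1) (\<lambda>_. 1) ^^ M) G) 0)"
    by (rule binom_expand) (rule mix)
  also have "\<dots> = (\<Sum>M\<le>N. real (N choose M) * (1-r)^(N-M) * r^M * G (real M))"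
    using shift_pow[unfolded shiftop_def] by simp
  finally show ?thesis .
qed

lemma bern_sums:
  shows "(\<Sum>M\<le>N. real (N choose M) * (1-r)^(N-M) * r^M) = 1"
    and "(\<Sum>M\<le>N. real (N choose M) * (1-r)^(N-M) * r^M * (real M - real N * r)^2) = real N * (r * (1 - r))"
proof -
  have s1: "(\<Sum>b\<in>(UNIV::bool set). (if b then r else 1 - r)) = 1" by (simp add: UNIV_bool)
  have m: "r = (\<Sum>b\<in>(UNIV::bool set). (if b then r else 1 - r) * (if b then 1 else 0))" by (simp add: UNIV_bool)
  have v: "r * (1 - r) = (\<Sum>b\<in>(UNIV::bool set). (if b then r else 1 - r) * ((if b then 1 else 0) - r)^2)"
    by (simp add: UNIV_bool power2_eq_square algebra_simps)
  show "(\<Sum>M\<le>N. real (N choose M) * (1-r)^(N-M) * r^M) = 1"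
    using bern_pow[where r=r and N=N and G="\<lambda>_. 1"] oprpow_const[OF s1, where n=N and c=1 and s=0] by (simp add: bern_def)
  show "(\<Sum>M\<le>N. real (N choose M) * (1-r)^(N-M) * r^M * (real M - real N * r)^2) = real N * (r * (1 - r))"
    using bern_pow[where r=r and N=N and G="\<lambda>t. (t - real N * r)^2"] oprpow_quad[OF s1 m v, where n=N and c="real N * r" and s=0] by (simp add: bern_def)
qed

lemma opr_nonneg:
  assumes "\<forall>i\<in>I. p i \<ge> 0" "\<And>t. G t \<ge> 0"
  shows "(opr I p a ^^ n) G s \<ge> 0"
proof -
  have "(opr I p a ^^ n) (\<lambda>t. 0 * G t) s \<le> (opr I p a ^^ n) G s"
    by (rule oprpow_mono[OF assms(1)]) (simp add: assms(2))
  then show ?thesis unfolding oprpow_scale by simp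
qed

lemma twop_nonneg: "(\<And>t. G t \<ge> 0) \<Longrightarrow> (twop u v ^^ n) G s \<ge> 0"
  unfolding twop_def by (rule opr_nonneg) auto

lemma local_lb:
  fixes I :: "'i set" and p a :: "'i \<Rightarrow> real" and i0 i1 :: 'i and k m :: real
  assumes fin: "finite I" and p0: "\<forall>i\<in>I. p i \<ge> 0" and s1: "(\<Sum>i\<in>I. p i) = 1"
    and m: "m = (\<Sum>i\<in>I. p i * a i)"
    and i0: "i0 \<in> I" and i1: "i1 \<in> I" and um: "a i0 < m" and mv: "m < a i1"
    and pi0: "p i0 > 0" and pi1: "p i1 > 0" and k: "k \<ge> 0"
  shows "\<exists>c>0. \<exists>N0. \<forall>N\<ge>N0. (opr I p a ^^ N)
     (\<lambda>t. if real N * m - k - (a i1 - a i0) \<le> t \<and> t \<le> real N * m - k then 1 else 0) 0 \<ge> c / sqrt (real N)"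
proof -
  define u where "u = a i0"
  define v where "v = a i1"
  define g where "g = v - u"
  have g0: "g > 0" using um mv unfolding g_def u_def v_def by simp
  have ne: "i0 \<noteq> i1" using um mv by auto
  define \<rho> where "\<rho> = min (p i0) (p i1)"
  have r0: "\<rho> > 0" using pi0 pi1 unfolding \<rho>_def by simp
  have "p i0 + p i1 \<le> 1"
  proof -
    have "(\<Sum>i\<in>{i0,i1}. p i) \<le> (\<Sum>i\<in>I. p i)"
      by (rule sum_mono2[OF fin]) (use i0 i1 p0 in auto)
    then show ?thesis using ne s1 by simp
  qed
  then have r2: "\<rho> \<le> 1/2" unfolding \<rho>_def by linarith
  define pB where "pB i = (if i = i0 then 1/2 else 0) + (if i = i1 then 1/2 else (0::real))" for i
  define pA where "pA i = (p i - \<rho> * pB i) / (1 - \<rho>)" for i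
  have sB: "(\<Sum>i\<in>I. pB i) = 1" unfolding pB_def using i0 i1 fin by (simp add: sum.distrib)
  have sBa: "(\<Sum>i\<in>I. pB i * a i) = (u + v)/2" unfolding pB_def u_def v_def using i0 i1 fin
    by (simp add: sum.distrib distrib_right if_distrib[of "\<lambda>x. x * _"] cong: if_cong)
  have pA0: "\<forall>i\<in>I. pA i \<ge> 0"
  proof
    fix i assume "i \<in> I"
    have "\<rho> * pB i \<le> p i"
      using ne pi0 pi1 r0 p0 \<open>i\<in>I\<close> unfolding pB_def \<rho>_def by auto
    then show "pA i \<ge> 0" unfolding pA_def using r2 by simp
  qed
  have sA: "(\<Sum>i\<in>I. pA i) = 1"
  proof -
    have "(\<Sum>i\<in>I. pA i) = (\<Sum>i\<in>I. p i - \<rho> * pB i) / (1 - \<rho>)"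
      unfolding pA_def by (simp add: sum_divide_distrib)
    also have "\<dots> = (1 - \<rho>) / (1 - \<rho>)" by (simp add: sum_subtractf sum_distrib_left[symmetric] s1 sB)
    finally show ?thesis using r2 by simp
  qed
  define mA where "mA = (\<Sum>i\<in>I. pA i * a i)"
  define vA where "vA = (\<Sum>i\<in>I. pA i * (a i - mA)^2)"
  have vA0: "vA \<ge> 0" unfolding vA_def using pA0 by (intro sum_nonneg) auto
  have mix: "m = (1 - \<rho>) * mA + \<rho> * ((u + v)/2)"
  proof -
    have "(1 - \<rho>) * mA = (\<Sum>i\<in>I. (p i - \<rho> * pB i) * a i)"
      unfolding mA_def pA_def using r2 by (simp add: sum_distrib_left)
    also have "\<dots> = m - \<rho> * ((u+v)/2)"
      by (simp add: m left_diff_distrib sum_subtractf sum_distrib_left[symmetric] mult.assoc sBa)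
    finally show ?thesis by simp
  qed
  have decomp: "opr I p a G s = (1 - \<rho>) * opr I pA a G s + \<rho> * opr (UNIV::bool set) (\<lambda>_. 1/2) (\<lambda>b. if b then v else u) G s" for G s
  proof -
    have "(1 - \<rho>) * opr I pA a G s = (\<Sum>i\<in>I. (p i - \<rho> * pB i) * G (s + a i))"
      unfolding opr_def pA_def using r2 by (simp add: sum_distrib_left)
    also have "\<dots> = opr I p a G s - \<rho> * (\<Sum>i\<in>I. pB i * G (s + a i))"
      unfolding opr_def by (simp add: left_diff_distrib sum_subtractf sum_distrib_left mult.assoc)
    also have "(\<Sum>i\<in>I. pB i * G (s + a i)) = opr (UNIV::bool set) (\<lambda>_. 1/2) (\<lambda>b. if b then v else u) G s"
      unfolding pB_def opr_def u_def v_def using i0 i1 fin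
      by (simp add: sum.distrib distrib_right if_distrib[of "\<lambda>x. x * _"] UNIV_bool cong: if_cong)
    finally show ?thesis by simp
  qed
  define F where "F N = (\<lambda>t. if real N * m - k - (a i1 - a i0) \<le> t \<and> t \<le> real N * m - k then 1 else (0::real))" for N
  have F0: "F N t \<ge> 0" for N t unfolding F_def by simp
  define w where "w N M = real (N choose M) * (1 - \<rho>)^(N-M) * \<rho>^M" for N M
  have w0: "w N M \<ge> 0" for N M unfolding w_def using r2 r0 by simp
  have expand: "(opr I p a ^^ N) G 0 = (\<Sum>M\<le>N. w N M * (opr I pA a ^^ (N-M)) ((twop u v ^^ M) G) 0)" for N G
    unfolding w_def twop_def by (rule binom_expand) (rule decomp)
  define E where "E = vA + 1"
  have E0: "E > 0" "E^2 \<ge> 2 * vA" unfolding E_def using vA0 by (auto simp: power2_eq_square algebra_simps)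
  define \<alpha> where "\<alpha> = (\<bar>mA - (u+v)/2\<bar> + E) / g"
  define \<beta> where "\<beta> = k / g + 2"
  have al0: "\<alpha> \<ge> 0" unfolding \<alpha>_def using E0 g0 by simp
  have be0: "\<beta> \<ge> 2" unfolding \<beta>_def using k g0 by simp
  define \<kappa> where "\<kappa> = 8 * (\<alpha> + \<beta> + 2)^2 / \<rho>"
  define T where "T = max 1 (16 * (\<alpha> + \<beta> + 1) / \<rho>)"
  have T1: "T \<ge> 1" unfolding T_def by simp
  define c where "c = exp (-\<kappa>) / 4 * (1/2) * (3/4)"
  have c0: "c > 0" unfolding c_def by simp
  define N0 where "N0 = nat \<lceil>T^2\<rceil>"
  have main: "(opr I p a ^^ N) (F N) 0 \<ge> c / sqrt (real N)" if N: "N \<ge> N0" for N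
  proof -
    define x where "x = sqrt (real N)"
    have "real N \<ge> T^2" using N unfolding N0_def by linarith
    then have xT: "x \<ge> T" unfolding x_def using T1 by (metis abs_of_nonneg order_trans real_sqrt_abs real_sqrt_le_mono zero_le_one)
    have x1: "x \<ge> 1" using xT T1 by simp
    have xx: "x^2 = real N" unfolding x_def by simp
    have xbig: "x * \<rho> \<ge> 16 * (\<alpha> + \<beta> + 1)" using xT r0 unfolding T_def by (simp add: field_simps)
    define h where "h = exp (-\<kappa>) / (4 * x)"
    have h0: "h \<ge> 0" unfolding h_def using x1 by simp
    have good: "(opr I pA a ^^ (N-M)) ((twop u v ^^ M) (F N)) 0 \<ge> h / 2"
      if M: "M \<le> N" "\<bar>real M - real N * \<rho>\<bar> \<le> x" for M
    proof -
      have Mlow: "real M \<ge> x^2 * \<rho> / 2"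
      proof -
        have "x \<le> x^2 * \<rho> / 2"
        proof -
          have "2 \<le> x * \<rho>" using xbig al0 be0 by (smt (verit))
          then have "x * 2 \<le> x * (x * \<rho>)" using x1 by (intro mult_left_mono) auto
          then show ?thesis by (simp add: power2_eq_square algebra_simps)
        qed
        then show ?thesis using M(2) xx by (simp add: abs_le_iff algebra_simps)
      qed
      have Mup: "real M \<le> x^2" using M(1) xx by simp
      have claimB: "(twop u v ^^ M) (F N) t \<ge> h" if t: "\<bar>t - (0 + real (N-M) * mA)\<bar> \<le> E * x" for t
      proof -
        define y where "y = (real N * m - k - g - t - real M * u) / g"
        define jr where "jr = \<lceil>y\<rceil>"
        have jy: "y \<le> of_int jr" "of_int jr \<le> y + 1" unfolding jr_def
          by (simp_all add: le_of_int_ceiling of_int_ceiling_le_add_one)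
        have NM: "real (N - M) = real N - real M" using M(1) by simp
        have key: "real N * m - t - real M * ((u+v)/2) = (real M - real N * \<rho>) * (mA - (u+v)/2) - (t - real (N-M) * mA)"
          unfolding NM mix by (simp add: field_simps)
        have b1: "\<bar>(real M - real N * \<rho>) * (mA - (u+v)/2)\<bar> \<le> x * \<bar>mA - (u+v)/2\<bar>"
          unfolding abs_mult using M(2) by (intro mult_right_mono) auto
        have b2: "\<bar>real N * m - t - real M * ((u+v)/2)\<bar> \<le> x * (\<bar>mA - (u+v)/2\<bar> + E)"
          using key b1 t by (simp add: algebra_simps)
        have ym: "y - real M / 2 = (real N * m - t - real M * ((u+v)/2) - k - g) / g"
          unfolding y_def g_def using g0 unfolding g_def by (simp add: field_simps)
        define d where "d = \<alpha> * x + \<beta>"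
        have ymb: "\<bar>y - real M / 2\<bar> \<le> \<alpha> * x + k / g + 1"
        proof -
          have "\<bar>real N * m - t - real M * ((u+v)/2) - k - g\<bar> \<le> x * (\<bar>mA - (u+v)/2\<bar> + E) + k + g"
            using b2 k g0 by linarith
          then have "\<bar>y - real M / 2\<bar> \<le> (x * (\<bar>mA - (u+v)/2\<bar> + E) + k + g) / g"
            unfolding ym abs_divide using g0 by (simp add: divide_right_mono)
          also have "\<dots> = \<alpha> * x + k / g + 1" unfolding \<alpha>_def using g0 by (simp add: field_simps)
          finally show ?thesis .
        qed
        have dj: "\<bar>of_int jr - real M / 2\<bar> \<le> d" unfolding d_def \<beta>_def using jy ymb by linarith
        have d0: "d \<ge> 0" unfolding d_def using al0 be0 x1 by simp
        have d8: "8 * (d + 1) \<le> real M"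
        proof -
          have "(\<beta> + 1) * 1 \<le> (\<beta> + 1) * x" using be0 x1 by (intro mult_left_mono) auto
          then have "d + 1 \<le> (\<alpha> + \<beta> + 1) * x" unfolding d_def by (simp add: algebra_simps)
          then have "8 * (d + 1) \<le> x * (16 * (\<alpha> + \<beta> + 1)) / 2" by (simp add: algebra_simps)
          also have "\<dots> \<le> x * (x * \<rho>) / 2" using xbig x1 by (intro divide_right_mono mult_left_mono) auto
          also have "\<dots> = x^2 * \<rho> / 2" by (simp add: power2_eq_square)
          finally show ?thesis using Mlow by linarith
        qed
        have M1: "M \<ge> 1" using d8 d0 by simp
        have "real_of_int jr \<ge> 0" using dj d8 d0 by (simp add: abs_le_iff)
        then have jr0: "jr \<ge> 0" by simp
        have jrM: "of_int jr \<le> real M" using dj d8 d0 by (simp add: abs_le_iff)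
        define j where "j = nat jr"
        have jj: "real j = of_int jr" unfolding j_def using jr0 by simp
        have jM: "j \<le> M" using jrM jj by linarith
        have bl: "real (M choose j) / 2^M \<ge> exp(-4*(d+1)*(d+2)/M) / (4 * sqrt M)"
          by (rule binom_lb[OF M1 jM _ d8]) (use dj jj in simp)
        have "h \<le> exp(-4*(d+1)*(d+2)/M) / (4 * sqrt M)"
        proof -
          have Mp: "real M > 0" using M1 by simp
          have "(\<beta> + 2) * 1 \<le> (\<beta> + 2) * x" using be0 x1 by (intro mult_left_mono) auto
          then have "d + 2 \<le> (\<alpha> + \<beta> + 2) * x" unfolding d_def by (simp add: algebra_simps)
          moreover have "d + 1 \<le> d + 2" by simp
          ultimately have "(d+1)*(d+2) \<le> ((\<alpha> + \<beta> + 2) * x) * ((\<alpha> + \<beta> + 2) * x)" using d0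
            by (intro mult_mono) auto
          then have "(d+1)*(d+2) \<le> ((\<alpha> + \<beta> + 2) * x)^2" by (simp add: power2_eq_square)
          then have "4*((d+1)*(d+2)) \<le> 4 * ((\<alpha> + \<beta> + 2)^2 * x^2)"
            by (intro mult_left_mono) (simp_all add: power_mult_distrib)
          then have "4*(d+1)*(d+2) \<le> 4 * (\<alpha> + \<beta> + 2)^2 * x^2" by (simp only: mult.assoc)
          also have "\<dots> \<le> \<kappa> * real M"
          proof -
            have "\<kappa> * (x^2 * \<rho> / 2) = 4 * (\<alpha> + \<beta> + 2)^2 * x^2" unfolding \<kappa>_def using r0 by (simp add: field_simps)
            moreover have "\<kappa> * (x^2 * \<rho> / 2) \<le> \<kappa> * real M" using Mlow r0 unfolding \<kappa>_def by (intro mult_left_mono) auto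
            ultimately show ?thesis by linarith
          qed
          finally have "4*(d+1)*(d+2) / real M \<le> \<kappa>" using Mp by (simp add: divide_le_eq)
          moreover have "-4*(d+1)*(d+2)/real M = - (4*(d+1)*(d+2) / real M)" by (simp add: algebra_simps minus_divide_left)
          ultimately have "-\<kappa> \<le> -4*(d+1)*(d+2)/real M" by linarith
          then have e1: "exp (-\<kappa>) \<le> exp(-4*(d+1)*(d+2)/M)" by simp
          have "sqrt (real M) \<le> sqrt (x^2)" using Mup by (rule real_sqrt_le_mono)
          then have sM: "sqrt (real M) \<le> x" using x1 by simp
          have sMp: "sqrt (real M) > 0" using Mp by simp
          have "h = exp (-\<kappa>) / (4 * x)" by (rule h_def)
          also have "\<dots> \<le> exp(-4*(d+1)*(d+2)/M) / (4 * x)" using e1 x1 by (simp add: divide_right_mono)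
          also have "\<dots> \<le> exp(-4*(d+1)*(d+2)/M) / (4 * sqrt M)"
            using sM sMp x1 by (intro divide_left_mono) auto
          finally show ?thesis .
        qed
        also have "\<dots> \<le> real (M choose j) / 2^M" by (rule bl)
        also have "real (M choose j) / 2^M = real (M choose j) / 2^M * F N (t + real (M - j) * u + real j * v)"
        proof -
          have "t + real (M - j) * u + real j * v = t + real M * u + of_int jr * g"
            unfolding g_def using jM jj by (simp add: of_nat_diff algebra_simps)
          moreover have "real N * m - k - g \<le> t + real M * u + of_int jr * g"
            using jy(1) g0 unfolding y_def by (simp add: divide_le_eq algebra_simps)
          moreover have "t + real M * u + of_int jr * g \<le> real N * m - k"
          proof -
            have "of_int jr * g \<le> (y + 1) * g" using jy(2) g0 by (intro mult_right_mono) auto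
            moreover have "y * g = real N * m - k - g - t - real M * u" unfolding y_def using g0 by simp
            ultimately show ?thesis by (simp add: algebra_simps)
          qed
          ultimately have "F N (t + real (M - j) * u + real j * v) = 1"
            unfolding F_def g_def u_def v_def by simp
          then show ?thesis by simp
        qed
        also have "\<dots> \<le> (\<Sum>j'\<le>M. real (M choose j') / 2^M * F N (t + real (M - j') * u + real j' * v))"
          by (rule member_le_sum[where f="\<lambda>j'. real (M choose j') / 2^M * F N (t + real (M - j') * u + real j' * v)"])
             (use jM F0 in auto)
        also have "\<dots> = (twop u v ^^ M) (F N) t" by (rule twop_pow[symmetric])
        finally show ?thesis .
      qed
      have "(opr I pA a ^^ (N-M)) ((twop u v ^^ M) (F N)) 0 \<ge> h * (1 - real (N-M) * vA / (E * x)^2)"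
        by (rule oprpow_cheb[OF pA0 sA mA_def vA_def h0 _ twop_nonneg[OF F0] claimB])
           (use E0 x1 in auto)
      moreover have "real (N-M) * vA / (E * x)^2 \<le> 1/2"
      proof -
        have "real (N-M) * vA \<le> x^2 * vA" using M(1) xx vA0 by (intro mult_right_mono) auto
        also have "\<dots> \<le> x^2 * (E^2 / 2)" using E0 x1 by (intro mult_left_mono) auto
        finally have "real (N-M) * vA \<le> (E * x)^2 / 2" by (simp add: power_mult_distrib mult.commute)
        moreover have "(E * x)^2 > 0" using E0 x1 by simp
        ultimately show ?thesis by (simp add: divide_le_eq)
      qed
      ultimately show ?thesis
      proof -
        assume a1: "h * (1 - real (N-M) * vA / (E * x)^2) \<le> (opr I pA a ^^ (N-M)) ((twop u v ^^ M) (F N)) 0"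
          and a2: "real (N-M) * vA / (E * x)^2 \<le> 1/2"
        have "h * (1/2) \<le> h * (1 - real (N-M) * vA / (E * x)^2)" using a2 h0 by (intro mult_left_mono) auto
        then show ?thesis using a1 by linarith
      qed
    qed
    have pt: "w N M * ((opr I pA a ^^ (N-M)) ((twop u v ^^ M) (F N)) 0) \<ge> w N M * ((h/2) * (1 - (real M - real N * \<rho>)^2 / x^2))"
      if "M \<in> {..N}" for M
    proof (rule mult_left_mono[OF _ w0])
      show "(h/2) * (1 - (real M - real N * \<rho>)^2 / x^2) \<le> (opr I pA a ^^ (N-M)) ((twop u v ^^ M) (F N)) 0"
      proof (cases "\<bar>real M - real N * \<rho>\<bar> \<le> x")
        case True
        have "(h/2) * (1 - (real M - real N * \<rho>)^2 / x^2) \<le> h/2" using h0 x1 by (simp add: mult_left_le)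
        then show ?thesis using good[OF _ True] that by simp
      next
        case False
        then have "x^2 < (real M - real N * \<rho>)^2" using x1 by (metis abs_le_square_iff abs_of_nonneg le_less_linear less_imp_le order.trans zero_le_one) 
        then have "1 - (real M - real N * \<rho>)^2 / x^2 < 0" using x1 by (simp add: field_simps)
        then have "(h/2) * (1 - (real M - real N * \<rho>)^2 / x^2) \<le> 0" using h0 by (simp add: mult_nonneg_nonpos)
        also have "0 \<le> (opr I pA a ^^ (N-M)) ((twop u v ^^ M) (F N)) 0"
          by (rule opr_nonneg[OF pA0 twop_nonneg[OF F0]])
        finally show ?thesis .
      qed
    qed
    have "(opr I p a ^^ N) (F N) 0 \<ge> (\<Sum>M\<le>N. w N M * ((h/2) * (1 - (real M - real N * \<rho>)^2 / x^2)))"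
      unfolding expand by (rule sum_mono) (rule pt)
    also have "(\<Sum>M\<le>N. w N M * ((h/2) * (1 - (real M - real N * \<rho>)^2 / x^2)))
        = (h/2) * ((\<Sum>M\<le>N. w N M) - (\<Sum>M\<le>N. w N M * (real M - real N * \<rho>)^2) / x^2)"
      by (simp add: sum_distrib_left sum_subtractf sum_divide_distrib algebra_simps)
    also have "\<dots> = (h/2) * (1 - \<rho> * (1 - \<rho>))"
    proof -
      have "x^2 \<ge> 1" using x1 by (simp add: one_le_power)
      then have Np: "real N > 0" using xx by simp
      show ?thesis using bern_sums[of N \<rho>] xx Np unfolding w_def by simp
    qed
    also have "\<dots> \<ge> (h/2) * (3/4)"
    proof -
      have "0 \<le> (\<rho> - 1/2)^2" by simp
      then have "\<rho> * (1 - \<rho>) \<le> 1/4" by (simp add: power2_eq_square algebra_simps)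
      then show ?thesis using h0 by (intro mult_left_mono) auto
    qed
    also have "(h/2) * (3/4) = c / sqrt (real N)" unfolding h_def c_def x_def by simp
    finally show ?thesis .
  qed
  show ?thesis
    by (rule exI[of _ c], rule conjI[OF c0], rule exI[of _ N0]) (use main in \<open>auto simp: F_def\<close>)
qed

definition ell :: "('x::finite \<Rightarrow> 'y::finite \<Rightarrow> real) \<Rightarrow> 'y \<Rightarrow> real" where
  "ell W y = ln (1 / alpha W y)"

lemma finite_lists_N: "finite {zs :: 'y::finite list. length zs = N}"
  using finite_lists_length_eq[of "UNIV :: 'y set" N] by simp

lemma sum_lists_Suc:
  "(\<Sum>ys\<in>{ys :: 'y::finite list. length ys = Suc N}. f ys) = (\<Sum>y\<in>UNIV. \<Sum>zs\<in>{zs. length zs = N}. f (y # zs))"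
proof -
  have e: "{ys :: 'y list. length ys = Suc N} = (\<lambda>(zs, y). y # zs) ` ({zs. length zs = N} \<times> UNIV)"
    using lists_length_Suc_eq[of "UNIV :: 'y set" N] by simp
  have inj: "inj_on (\<lambda>(zs, y). y # zs) ({zs :: 'y list. length zs = N} \<times> UNIV)"
    by (auto simp: inj_on_def)
  have "(\<Sum>ys\<in>{ys :: 'y list. length ys = Suc N}. f ys) = (\<Sum>(zs,y)\<in>{zs. length zs = N} \<times> UNIV. f (y # zs))"
    unfolding e by (subst sum.reindex[OF inj]) (simp add: case_prod_unfold)
  also have "\<dots> = (\<Sum>zs\<in>{zs. length zs = N}. \<Sum>y\<in>UNIV. f (y # zs))"
    by (rule sum.cartesian_product[symmetric])
  also have "\<dots> = (\<Sum>y\<in>UNIV. \<Sum>zs\<in>{zs. length zs = N}. f (y # zs))"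
    by (rule sum.swap)
  finally show ?thesis .
qed

lemma sym_indep:
  fixes W :: "'x::finite \<Rightarrow> 'y::finite \<Rightarrow> real"
  assumes "gallager_symmetric W"
  shows "(\<Sum>y\<in>UNIV. W x y * G (ell W y)) = (\<Sum>y\<in>UNIV. W x' y * G (ell W y))"
proof -
  obtain P where P: "partition_on (UNIV :: 'y set) P"
    and H: "\<forall>B\<in>P. (\<forall>x x'. \<exists>\<sigma>. bij_betw \<sigma> B B \<and> (\<forall>y\<in>B. W x' y = W x (\<sigma> y))) \<and>
               (\<forall>y\<in>B. \<forall>y'\<in>B. \<exists>\<pi>. bij \<pi> \<and> (\<forall>x. W x y' = W (\<pi> x) y))"
    using assms unfolding gallager_symmetric_def by blast
  have rows: "\<exists>\<sigma>. bij_betw \<sigma> B B \<and> (\<forall>y\<in>B. W x' y = W x (\<sigma> y))" if "B \<in> P" for B x x'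
    using H that by blast
  have cols: "\<exists>\<pi>. bij \<pi> \<and> (\<forall>x. W x y' = W (\<pi> x) y)" if "B \<in> P" "y \<in> B" "y' \<in> B" for B y y'
    using H that by blast
  have ellB: "ell W y' = ell W y" if B: "B \<in> P" "y \<in> B" "y' \<in> B" for B y y'
  proof -
    obtain \<pi> where \<pi>: "bij \<pi>" "\<forall>x. W x y' = W (\<pi> x) y" using cols[OF B] by blast
    have eq: "{x. W x y' > 0} = \<pi> -` {x. W x y > 0}" using \<pi>(2) by auto
    have "card (\<pi> -` {x. W x y > 0}) = card {x. W x y > 0}"
      using \<pi>(1) by (intro card_vimage_inj) (auto simp: bij_def)
    then have "card {x. W x y > 0} = card {x. W x y' > 0}" unfolding eq by simp
    then show ?thesis unfolding ell_def alpha_def by simp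
  qed
  have fin: "finite P" by simp
  have blk: "(\<Sum>y\<in>B. W x y * G (ell W y)) = (\<Sum>y\<in>B. W x' y * G (ell W y))" if B: "B \<in> P" for B
  proof -
    obtain \<sigma> where \<sigma>: "bij_betw \<sigma> B B" "\<forall>y\<in>B. W x' y = W x (\<sigma> y)" using rows[OF B] by blast
    have "(\<Sum>y\<in>B. W x' y * G (ell W y)) = (\<Sum>y\<in>B. W x (\<sigma> y) * G (ell W (\<sigma> y)))"
    proof (rule sum.cong[OF refl])
      fix y assume y: "y \<in> B"
      have sy: "\<sigma> y \<in> B" using \<sigma>(1) y by (meson bij_betwE)
      show "W x' y * G (ell W y) = W x (\<sigma> y) * G (ell W (\<sigma> y))"
        using \<sigma>(2) y ellB[OF B y sy] by simp
    qed
    also have "\<dots> = (\<Sum>y\<in>B. W x y * G (ell W y))"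
      by (rule sum.reindex_bij_betw[OF \<sigma>(1), where g="\<lambda>y. W x y * G (ell W y)"])
    finally show ?thesis by simp
  qed
  have U: "\<Union>P = UNIV" and D: "disjoint P" using P unfolding partition_on_def by auto
  have "(\<Sum>y\<in>UNIV. W x y * G (ell W y)) = (\<Sum>B\<in>P. \<Sum>y\<in>B. W x y * G (ell W y))"
    unfolding U[symmetric] using sum.Union_disjoint[of P "\<lambda>y. W x y * G (ell W y)"] D by (auto simp: disjoint_def)
  also have "\<dots> = (\<Sum>B\<in>P. \<Sum>y\<in>B. W x' y * G (ell W y))" using blk by simp
  also have "\<dots> = (\<Sum>y\<in>UNIV. W x' y * G (ell W y))"
    unfolding U[symmetric] using sum.Union_disjoint[of P "\<lambda>y. W x' y * G (ell W y)"] D by (auto simp: disjoint_def)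
  finally show ?thesis .
qed

lemma lists_decomp:
  fixes W :: "'x::finite \<Rightarrow> 'y::finite \<Rightarrow> real"
  shows "(\<Sum>ys\<in>{ys. length ys = Suc N}. (\<Prod>n<Suc N. W (\<psi> (take n ys)) (ys ! n)) * F (\<Sum>n<Suc N. ell W (ys ! n)))
    = (\<Sum>y\<in>UNIV. W (\<psi> []) y * (\<Sum>zs\<in>{zs. length zs = N}. (\<Prod>n<N. W (\<psi> (y # take n zs)) (zs ! n)) * F (ell W y + (\<Sum>n<N. ell W (zs ! n)))))"
  unfolding sum_lists_Suc
  by (simp add: prod.lessThan_Suc_shift sum.lessThan_Suc_shift sum_distrib_left mult.assoc del: prod.lessThan_Suc sum.lessThan_Suc)

lemma adaptive_eq:
  fixes W :: "'x::finite \<Rightarrow> 'y::finite \<Rightarrow> real"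
  assumes indep: "\<And>x x' G. (\<Sum>y\<in>UNIV. W x y * G (ell W y)) = (\<Sum>y\<in>UNIV. W x' y * G (ell W y))"
  shows "(\<Sum>ys\<in>{ys. length ys = N}. (\<Prod>n<N. W (\<psi> (take n ys)) (ys ! n)) * F (\<Sum>n<N. ell W (ys ! n)))
       = (\<Sum>ys\<in>{ys. length ys = N}. (\<Prod>n<N. W x0 (ys ! n)) * F (\<Sum>n<N. ell W (ys ! n)))"
proof (induction N arbitrary: \<psi> F)
  case 0 then show ?case by simp
next
  case (Suc N)
  define \<Phi> where "\<Phi> c = (\<Sum>zs\<in>{zs. length zs = N}. (\<Prod>n<N. W x0 (zs ! n)) * F (c + (\<Sum>n<N. ell W (zs ! n))))" for c
  have inner: "(\<Sum>zs\<in>{zs. length zs = N}. (\<Prod>n<N. W (\<psi> (y # take n zs)) (zs ! n)) * F (ell W y + (\<Sum>n<N. ell W (zs ! n)))) = \<Phi> (ell W y)" for y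
    unfolding \<Phi>_def using Suc.IH[of "\<lambda>l. \<psi> (y # l)" "\<lambda>s. F (ell W y + s)"] by simp
  have "(\<Sum>ys\<in>{ys. length ys = Suc N}. (\<Prod>n<Suc N. W (\<psi> (take n ys)) (ys ! n)) * F (\<Sum>n<Suc N. ell W (ys ! n)))
      = (\<Sum>y\<in>UNIV. W (\<psi> []) y * \<Phi> (ell W y))"
    unfolding lists_decomp inner ..
  also have "\<dots> = (\<Sum>y\<in>UNIV. W x0 y * \<Phi> (ell W y))" by (rule indep)
  also have "\<dots> = (\<Sum>ys\<in>{ys. length ys = Suc N}. (\<Prod>n<Suc N. W x0 (ys ! n)) * F (\<Sum>n<Suc N. ell W (ys ! n)))"
    using lists_decomp[of W "\<lambda>_. x0" N F] unfolding \<Phi>_def by simp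
  finally show ?case .
qed

lemma rep_opr:
  fixes W :: "'x::finite \<Rightarrow> 'y::finite \<Rightarrow> real"
  shows "(\<Sum>ys\<in>{ys. length ys = N}. (\<Prod>n<N. W x0 (ys ! n)) * F (s + (\<Sum>n<N. ell W (ys ! n))))
       = (opr UNIV (W x0) (ell W) ^^ N) F s"
proof (induction N arbitrary: s)
  case 0 then show ?case by simp
next
  case (Suc N)
  have "(\<Sum>ys\<in>{ys. length ys = Suc N}. (\<Prod>n<Suc N. W x0 (ys ! n)) * F (s + (\<Sum>n<Suc N. ell W (ys ! n))))
      = (\<Sum>y\<in>UNIV. W x0 y * (\<Sum>zs\<in>{zs. length zs = N}. (\<Prod>n<N. W x0 (zs ! n)) * F ((s + ell W y) + (\<Sum>n<N. ell W (zs ! n)))))"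
    using lists_decomp[of W "\<lambda>_. x0" N "\<lambda>t. F (s + t)"] by (simp add: add.assoc)
  also have "\<dots> = (\<Sum>y\<in>UNIV. W x0 y * (opr UNIV (W x0) (ell W) ^^ N) F (s + ell W y))"
    using Suc.IH by simp
  also have "\<dots> = (opr UNIV (W x0) (ell W) ^^ Suc N) F s" by (simp add: opr_def)
  finally show ?case .
qed

lemma Sset_filter: "Sset W N r = {ys \<in> {ys. length ys = N}. (1 / real N) * (\<Sum>n<N. ell W (ys ! n)) \<le> r}"
  unfolding Sset_def ell_def by auto

lemma prob_rep:
  fixes W :: "'x::finite \<Rightarrow> 'y::finite \<Rightarrow> real"
  shows "prob_const W N x0 (Sset W N r) = (opr UNIV (W x0) (ell W) ^^ N) (\<lambda>t. if (1 / real N) * t \<le> r then 1 else 0) 0"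
proof -
  have "prob_const W N x0 (Sset W N r) = (\<Sum>ys\<in>{ys. length ys = N}. (\<Prod>n<N. W x0 (ys ! n)) * (if (1 / real N) * (0 + (\<Sum>n<N. ell W (ys ! n))) \<le> r then 1 else 0))"
    unfolding prob_const_def Sset_filter by (subst sum.inter_filter[OF finite_lists_N]) (simp add: if_distrib cong: if_cong)
  also have "\<dots> = (opr UNIV (W x0) (ell W) ^^ N) (\<lambda>t. if (1 / real N) * t \<le> r then 1 else 0) 0"
    by (rule rep_opr)
  finally show ?thesis .
qed

lemma part_i:
  fixes W :: "'x::finite \<Rightarrow> 'y::finite \<Rightarrow> real"
  assumes indep: "\<And>x x' G. (\<Sum>y\<in>UNIV. W x y * G (ell W y)) = (\<Sum>y\<in>UNIV. W x' y * G (ell W y))"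
  shows "(\<Sum>ys\<in>Sset W N r. \<Prod>n<N. W (\<psi> (take n ys)) (ys ! n)) = prob_const W N x0 (Sset W N r)"
proof -
  have "(\<Sum>ys\<in>Sset W N r. \<Prod>n<N. W (\<psi> (take n ys)) (ys ! n)) = (\<Sum>ys\<in>{ys. length ys = N}. (\<Prod>n<N. W (\<psi> (take n ys)) (ys ! n)) * (if (1 / real N) * (\<Sum>n<N. ell W (ys ! n)) \<le> r then 1 else 0))"
    unfolding Sset_filter by (subst sum.inter_filter[OF finite_lists_N]) (simp add: if_distrib cong: if_cong)
  also have "\<dots> = (\<Sum>ys\<in>{ys. length ys = N}. (\<Prod>n<N. W x0 (ys ! n)) * (if (1 / real N) * (\<Sum>n<N. ell W (ys ! n)) \<le> r then 1 else 0))"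
    by (rule adaptive_eq[OF indep])
  also have "\<dots> = prob_const W N x0 (Sset W N r)"
    unfolding prob_const_def Sset_filter by (subst sum.inter_filter[OF finite_lists_N]) (simp add: if_distrib cong: if_cong)
  finally show ?thesis .
qed

lemma gibbs_term: assumes "(a::real) > 0" "b > 0" shows "a * ln (a / b) \<ge> a - b"
proof -
  have "ln (b / a) \<le> b / a - 1" using assms by (intro ln_le_minus_one) simp
  moreover have "ln (b / a) = - ln (a / b)" using assms by (simp add: ln_div)
  ultimately have "- ln (a / b) \<le> b / a - 1" by simp
  then have "a * (- ln (a / b)) \<le> a * (b / a - 1)" using assms by (intro mult_left_mono) auto
  then show ?thesis using assms by (simp add: algebra_simps)
qed

definition cd_real :: "('x::finite \<Rightarrow> 'y::finite \<Rightarrow> real) \<Rightarrow> ('x \<Rightarrow> 'y \<Rightarrow> real) \<Rightarrow> ('x \<Rightarrow> real) \<Rightarrow> real" where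
  "cd_real V W Q = (\<Sum>x\<in>UNIV. \<Sum>y\<in>UNIV. (if Q x * V x y = 0 then 0 else Q x * V x y * ln (V x y / W x y)))"

lemma cond_div_cases:
  "cond_div V W Q = \<infinity> \<or> ((\<forall>x y. Q x * V x y \<noteq> 0 \<longrightarrow> W x y \<noteq> 0) \<and> cond_div V W Q = ereal (cd_real V W Q))"
proof (cases "\<exists>x y. Q x * V x y \<noteq> 0 \<and> W x y = 0")
  case True
  then obtain x y where xy: "Q x * V x y \<noteq> 0" "W x y = 0" by blast
  have "(\<Sum>y\<in>UNIV. (if Q x * V x y = 0 then 0 else if W x y = 0 then \<infinity>
       else ereal (Q x * V x y * ln (V x y / W x y)))) = \<infinity>"
    unfolding sum_Pinfty using xy by (intro conjI bexI[of _ y]) auto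
  then have "cond_div V W Q = \<infinity>" unfolding cond_div_def sum_Pinfty by (intro conjI bexI[of _ x]) auto
  then show ?thesis by simp
next
  case False
  then have "cond_div V W Q = (\<Sum>x\<in>UNIV. \<Sum>y\<in>UNIV. ereal (if Q x * V x y = 0 then 0 else Q x * V x y * ln (V x y / W x y)))"
    unfolding cond_div_def by (intro sum.cong refl) auto
  also have "\<dots> = ereal (cd_real V W Q)" unfolding cd_real_def by simp
  finally show ?thesis using False by auto
qed

abbreviation unif :: "'x::finite \<Rightarrow> real" where "unif \<equiv> (\<lambda>x. 1 / real CARD('x))"

lemma pdist_unif: "pdist (unif :: 'x::finite \<Rightarrow> real)"
  unfolding pdist_def by simp

lemma mi_lower:
  fixes W V :: "'x::finite \<Rightarrow> 'y::finite \<Rightarrow> real"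
  assumes V: "channel V" and supp: "\<And>x y. V x y > 0 \<Longrightarrow> W x y > 0"
  shows "mutual_info unif V \<ge> (\<Sum>x\<in>UNIV. \<Sum>y\<in>UNIV. unif x * V x y * ell W y)"
proof -
  have V0: "V x y \<ge> 0" for x y using V unfolding channel_def pdist_def by simp
  define n where "n = real CARD('x)"
  have n0: "n > 0" unfolding n_def by simp
  have col: "(\<Sum>x\<in>UNIV. (if unif x * V x y > 0 then unif x * V x y * ln (V x y / out_dist unif V y) else 0))
      \<ge> (\<Sum>x\<in>UNIV. unif x * V x y * ell W y)" for y
  proof -
    define out where "out = out_dist unif V y"
    have out: "out = (\<Sum>x\<in>UNIV. unif x * V x y)" unfolding out_def out_dist_def ..
    show ?thesis
    proof (cases "out = 0")
      case True
      then have "\<forall>x\<in>UNIV. unif x * V x y = 0" unfolding out using V0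
        by (subst sum_nonneg_eq_0_iff[symmetric]) auto
      then show ?thesis by simp
    next
      case False
      then obtain x1 where "unif x1 * V x1 y \<noteq> 0" unfolding out by (meson sum.neutral)
      then have "V x1 y > 0" using V0[of x1 y] by (auto simp: less_le)
      then have Wx1: "W x1 y > 0" by (rule supp)
      define c where "c = card {x. W x y > 0}"
      have c1: "c \<ge> 1" unfolding c_def using Wx1 by (metis One_nat_def Suc_leI card_gt_0_iff empty_iff finite mem_Collect_eq)
      have ell: "ell W y = ln (n / c)" unfolding ell_def alpha_def c_def n_def by simp
      have outp: "out > 0" using False out V0 by (metis dual_order.order_iff_strict sum_nonneg zero_le_divide_1_iff zero_le_mult_iff of_nat_0_le_iff)
      have tm: "(if unif x * V x y > 0 then unif x * V x y * ln (V x y / out) else 0) - unif x * V x y * ell W y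
          \<ge> (if V x y > 0 then unif x * V x y - out / c else 0)" for x
      proof (cases "V x y > 0")
        case True
        have "ln (V x y / out) - ell W y = ln ((unif x * V x y) / (out / c))"
          unfolding ell using True outp n0 c1 n_def by (simp add: ln_div ln_mult field_simps)
        then have "unif x * V x y * ln (V x y / out) - unif x * V x y * ell W y = unif x * V x y * ln ((unif x * V x y) / (out / c))"
          by (simp add: algebra_simps)
        also have "\<dots> \<ge> unif x * V x y - out / c" using True outp c1 by (intro gibbs_term) auto
        finally show ?thesis using True by simp
      next
        case False
        then have "V x y = 0" using V0[of x y] by simp
        then show ?thesis by simp
      qed
      have A: "(\<Sum>x\<in>UNIV. (if V x y > 0 then unif x * V x y - out / c else 0)) = (\<Sum>x\<in>UNIV. (if V x y > 0 then unif x * V x y else 0)) - (\<Sum>x\<in>UNIV. (if V x y > 0 then out / c else 0))"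
        by (simp add: sum_subtractf[symmetric] if_distrib cong: if_cong)
      have B: "(\<Sum>x\<in>UNIV. (if V x y > 0 then unif x * V x y else 0)) = out"
        unfolding out by (intro sum.cong refl) (use V0 in \<open>auto simp: less_le\<close>)
      have C: "(\<Sum>x\<in>UNIV. (if V x y > 0 then out / c else 0)) = real (card {x. V x y > 0}) * (out / c)"
        by (simp add: sum.If_cases)
      have D: "real (card {x. V x y > 0}) * (out / c) \<le> real c * (out / c)"
      proof -
        have "card {x. V x y > 0} \<le> c" unfolding c_def by (rule card_mono) (auto intro: supp)
        then show ?thesis using outp c1 by (intro mult_right_mono) auto
      qed
      have E: "real c * (out / c) = out" using c1 by simp
      have "(\<Sum>x\<in>UNIV. (if V x y > 0 then unif x * V x y - out / c else 0)) \<ge> 0"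
        using A B C D E by linarith
      also have "\<dots> \<le> (\<Sum>x\<in>UNIV. (if unif x * V x y > 0 then unif x * V x y * ln (V x y / out) else 0) - unif x * V x y * ell W y)"
        by (rule sum_mono) (rule tm)
      finally show ?thesis unfolding out_def by (simp add: sum_subtractf)
    qed
  qed
  have "mutual_info unif V = (\<Sum>y\<in>UNIV. \<Sum>x\<in>UNIV. (if unif x * V x y > 0 then unif x * V x y * ln (V x y / out_dist unif V y) else 0))"
    unfolding mutual_info_def by (rule sum.swap)
  also have "\<dots> \<ge> (\<Sum>y\<in>UNIV. \<Sum>x\<in>UNIV. unif x * V x y * ell W y)" by (rule sum_mono) (rule col)
  finally show ?thesis by (subst sum.swap)
qed

lemma cd_lower:
  fixes W V :: "'x::finite \<Rightarrow> 'y::finite \<Rightarrow> real"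
  assumes W: "channel W" and V: "channel V" and supp: "\<And>x y. V x y > 0 \<Longrightarrow> W x y > 0"
    and lam: "\<theta> \<ge> 0" and Z: "\<And>x. (\<Sum>y\<in>UNIV. W x y * exp (- \<theta> * ell W y)) = Z" and Z0: "Z > 0"
    and MI: "mutual_info unif V \<le> R"
  shows "cd_real V W unif \<ge> - \<theta> * R - ln Z"
proof -
  have V0: "V x y \<ge> 0" for x y using V unfolding channel_def pdist_def by simp
  have W0: "W x y \<ge> 0" for x y using W unfolding channel_def pdist_def by simp
  have V1: "(\<Sum>y\<in>UNIV. V x y) = 1" for x using V unfolding channel_def pdist_def by simp
  have row: "(\<Sum>y\<in>UNIV. (if V x y = 0 then 0 else V x y * ln (V x y / W x y))) + \<theta> * (\<Sum>y\<in>UNIV. V x y * ell W y) + ln Z \<ge> 0" for x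
  proof -
    have tm: "(if V x y = 0 then 0 else V x y * ln (V x y / W x y)) + \<theta> * (V x y * ell W y) + V x y * ln Z
        \<ge> V x y - W x y * exp (- \<theta> * ell W y) / Z" for y
    proof (cases "V x y = 0")
      case True
      have "W x y * exp (- \<theta> * ell W y) / Z \<ge> 0" using W0 Z0 by simp
      then show ?thesis using True by simp
    next
      case False
      then have Vp: "V x y > 0" using V0[of x y] by simp
      then have Wp: "W x y > 0" by (rule supp)
      have "ln (V x y / (W x y * exp (- \<theta> * ell W y) / Z)) = ln (V x y / W x y) + \<theta> * ell W y + ln Z"
        using Vp Wp Z0 by (simp add: ln_div ln_mult)
      then have "V x y * ln (V x y / (W x y * exp (- \<theta> * ell W y) / Z)) = V x y * ln (V x y / W x y) + \<theta> * (V x y * ell W y) + V x y * ln Z"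
        by (simp add: algebra_simps)
      moreover have "V x y * ln (V x y / (W x y * exp (- \<theta> * ell W y) / Z)) \<ge> V x y - W x y * exp (- \<theta> * ell W y) / Z"
        using Vp Wp Z0 by (intro gibbs_term) auto
      ultimately show ?thesis using False by simp
    qed
    have z: "(\<Sum>y\<in>UNIV. V x y - W x y * exp (- \<theta> * ell W y) / Z) = 0"
      using V1[of x] Z[of x] Z0 by (simp add: sum_subtractf sum_divide_distrib[symmetric])
    have "(\<Sum>y\<in>UNIV. V x y - W x y * exp (- \<theta> * ell W y) / Z) \<le> (\<Sum>y\<in>UNIV. (if V x y = 0 then 0 else V x y * ln (V x y / W x y)) + \<theta> * (V x y * ell W y) + V x y * ln Z)"
      by (rule sum_mono) (rule tm)
    also have "\<dots> = (\<Sum>y\<in>UNIV. (if V x y = 0 then 0 else V x y * ln (V x y / W x y))) + \<theta> * (\<Sum>y\<in>UNIV. V x y * ell W y) + ln Z"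
      using V1[of x] by (simp add: sum.distrib sum_distrib_left sum_distrib_right[symmetric])
    finally have "0 \<le> (\<Sum>y\<in>UNIV. (if V x y = 0 then 0 else V x y * ln (V x y / W x y))) + \<theta> * (\<Sum>y\<in>UNIV. V x y * ell W y) + ln Z"
      using z by simp
    then show ?thesis by linarith
  qed
  define n where "n = real CARD('x)"
  have n0: "n > 0" unfolding n_def by simp
  have "cd_real V W unif = (\<Sum>x\<in>UNIV. unif x * (\<Sum>y\<in>UNIV. (if V x y = 0 then 0 else V x y * ln (V x y / W x y))))"
    unfolding cd_real_def by (simp add: sum_distrib_left mult.assoc if_distrib cong: if_cong)
  also have "\<dots> \<ge> (\<Sum>x\<in>UNIV. unif x * (- \<theta> * (\<Sum>y\<in>UNIV. V x y * ell W y) - ln Z))"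
  proof (rule sum_mono, rule mult_left_mono)
    fix x :: 'x
    show "- \<theta> * (\<Sum>y\<in>UNIV. V x y * ell W y) - ln Z \<le> (\<Sum>y\<in>UNIV. (if V x y = 0 then 0 else V x y * ln (V x y / W x y)))"
      using row[of x] by linarith
  qed simp
  also have "(\<Sum>x\<in>UNIV. unif x * (- \<theta> * (\<Sum>y\<in>UNIV. V x y * ell W y) - ln Z))
      = - \<theta> * (\<Sum>x\<in>UNIV. \<Sum>y\<in>UNIV. unif x * V x y * ell W y) - ln Z"
    by (simp add: algebra_simps sum_distrib_left sum_subtractf sum_divide_distrib)
  also have "- \<theta> * (\<Sum>x\<in>UNIV. \<Sum>y\<in>UNIV. unif x * V x y * ell W y) - ln Z \<ge> - \<theta> * R - ln Z"
  proof -
    have "(\<Sum>x\<in>UNIV. \<Sum>y\<in>UNIV. unif x * V x y * ell W y) \<le> R" using mi_lower[where V=V and W=W, OF V supp] MI by linarith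
    then show ?thesis using lam by (simp add: mult_left_mono)
  qed
  finally show ?thesis .
qed

lemma ESP_lower:
  fixes W :: "'x::finite \<Rightarrow> 'y::finite \<Rightarrow> real"
  assumes W: "channel W"
    and lam: "\<theta> \<ge> 0" and Z: "\<And>x. (\<Sum>y\<in>UNIV. W x y * exp (- \<theta> * ell W y)) = Z" and Z0: "Z > 0"
  shows "E_SP W R \<ge> ereal (- \<theta> * R - ln Z)"
proof -
  have "ereal (- \<theta> * R - ln Z) \<le> (INF V\<in>{V. channel V \<and> mutual_info unif V \<le> R}. cond_div V W unif)"
  proof (rule INF_greatest)
    fix V :: "'x \<Rightarrow> 'y \<Rightarrow> real" assume "V \<in> {V. channel V \<and> mutual_info unif V \<le> R}"
    then have V: "channel V" and MI: "mutual_info unif V \<le> R" by auto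
    have V0: "V x y \<ge> 0" for x y using V unfolding channel_def pdist_def by simp
    have W0: "W x y \<ge> 0" for x y using W unfolding channel_def pdist_def by simp
    show "ereal (- \<theta> * R - ln Z) \<le> cond_div V W unif"
      using cond_div_cases[of V W unif]
    proof
      assume "cond_div V W unif = \<infinity>" then show ?thesis by simp
    next
      assume H: "(\<forall>x y. unif x * V x y \<noteq> 0 \<longrightarrow> W x y \<noteq> 0) \<and> cond_div V W unif = ereal (cd_real V W unif)"
      have supp: "W x y > 0" if "V x y > 0" for x y
        using H that W0[of x y] by (auto simp: less_le)
      show ?thesis using H cd_lower[OF W V supp lam Z Z0 MI] by simp
    qed
  qed
  also have "\<dots> \<le> E_SP W R" unfolding E_SP_def
    by (rule SUP_upper) (simp add: pdist_unif)
  finally show ?thesis .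
qed

lemma ESP_infty:
  fixes W :: "'x::finite \<Rightarrow> 'y::finite \<Rightarrow> real"
  assumes W: "channel W" and L: "\<And>x y. W x y > 0 \<Longrightarrow> ell W y \<ge> L" and R': "R' < L"
  shows "E_SP W R' = \<infinity>"
proof -
  have W0: "W x y \<ge> 0" for x y using W unfolding channel_def pdist_def by simp
  have "\<infinity> \<le> (INF V\<in>{V. channel V \<and> mutual_info unif V \<le> R'}. cond_div V W unif)"
  proof (rule INF_greatest)
    fix V :: "'x \<Rightarrow> 'y \<Rightarrow> real" assume "V \<in> {V. channel V \<and> mutual_info unif V \<le> R'}"
    then have V: "channel V" and MI: "mutual_info unif V \<le> R'" by auto
    have V0: "V x y \<ge> 0" for x y using V unfolding channel_def pdist_def by simp
    have V1: "(\<Sum>y\<in>UNIV. V x y) = 1" for x using V unfolding channel_def pdist_def by simp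
    show "\<infinity> \<le> cond_div V W unif"
      using cond_div_cases[of V W unif]
    proof
      assume "cond_div V W unif = \<infinity>" then show ?thesis by simp
    next
      assume H: "(\<forall>x y. unif x * V x y \<noteq> 0 \<longrightarrow> W x y \<noteq> 0) \<and> cond_div V W unif = ereal (cd_real V W unif)"
      have supp: "W x y > 0" if "V x y > 0" for x y
        using H that W0[of x y] by (auto simp: less_le)
      have "(\<Sum>x\<in>UNIV. \<Sum>y\<in>UNIV. unif x * V x y * L) \<le> (\<Sum>x\<in>UNIV. \<Sum>y\<in>UNIV. unif x * V x y * ell W y)"
      proof (intro sum_mono)
        fix x y
        show "unif x * V x y * L \<le> unif x * V x y * ell W y"
        proof (cases "V x y > 0")
          case True then show ?thesis using L[OF supp[OF True]] by (intro mult_left_mono) auto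
        next
          case False then have "V x y = 0" using V0[of x y] by simp
          then show ?thesis by simp
        qed
      qed
      also have "\<dots> \<le> mutual_info unif V" by (rule mi_lower[where V=V and W=W, OF V supp])
      finally have "(\<Sum>x\<in>UNIV. \<Sum>y\<in>UNIV. unif x * V x y * L) \<le> R'" using MI by linarith
      moreover have "(\<Sum>x\<in>UNIV. \<Sum>y\<in>UNIV. unif x * V x y * L) = L"
      proof -
        have "(\<Sum>x\<in>UNIV. \<Sum>y\<in>UNIV. unif x * V x y * L) = (\<Sum>x\<in>(UNIV::'x set). unif x * L * (\<Sum>y\<in>UNIV. V x y))"
          by (simp add: sum_distrib_left sum_divide_distrib mult_ac)
        also have "\<dots> = (\<Sum>x\<in>(UNIV::'x set). unif x * L)" using V1 by simp
        also have "\<dots> = L" by simp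
        finally show ?thesis .
      qed
      ultimately show ?thesis using R' by simp
    qed
  qed
  also have "\<dots> \<le> E_SP W R'" unfolding E_SP_def by (rule SUP_upper) (simp add: pdist_unif)
  finally show ?thesis by (simp add: top_unique)
qed

lemma mi_le_card:
  fixes W :: "'x::finite \<Rightarrow> 'y::finite \<Rightarrow> real"
  assumes W: "channel W" and Q: "pdist Q"
  shows "mutual_info Q W \<le> real CARD('x)"
proof -
  have W0: "W x y \<ge> 0" for x y using W unfolding channel_def pdist_def by simp
  have W1: "(\<Sum>y\<in>UNIV. W x y) = 1" for x using W unfolding channel_def pdist_def by simp
  have Q0: "Q x \<ge> 0" for x using Q unfolding pdist_def by simp
  have row: "(\<Sum>y\<in>UNIV. (if Q x * W x y > 0 then Q x * W x y * ln (W x y / out_dist Q W y) else 0)) \<le> 1" for x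
  proof (cases "Q x > 0")
    case False
    then have "Q x = 0" using Q0[of x] by simp
    then show ?thesis by simp
  next
    case True
    have tm: "(if Q x * W x y > 0 then Q x * W x y * ln (W x y / out_dist Q W y) else 0) \<le> W x y * (Q x * ln (1 / Q x))" for y
    proof (cases "W x y > 0")
      case False
      then have "W x y = 0" using W0[of x y] by simp
      then show ?thesis by simp
    next
      case Wp: True
      have "Q x * W x y \<le> out_dist Q W y" unfolding out_dist_def
        by (rule member_le_sum[where f="\<lambda>x. Q x * W x y"]) (use Q0 W0 in auto)
      moreover have qw: "Q x * W x y > 0" using True Wp by simp
      ultimately have "W x y / out_dist Q W y \<le> W x y / (Q x * W x y)"
        using Wp by (intro divide_left_mono) auto
      also have "\<dots> = 1 / Q x" using Wp by simp
      finally have "W x y / out_dist Q W y \<le> 1 / Q x" .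
      then have "ln (W x y / out_dist Q W y) \<le> ln (1 / Q x)"
      proof -
        have op: "out_dist Q W y > 0" using qw \<open>Q x * W x y \<le> out_dist Q W y\<close> by linarith
        show ?thesis using \<open>W x y / out_dist Q W y \<le> 1 / Q x\<close> Wp op True by (subst ln_le_cancel_iff) auto
      qed
      then have "Q x * W x y * ln (W x y / out_dist Q W y) \<le> Q x * W x y * ln (1 / Q x)"
        using qw by (intro mult_left_mono) auto
      then show ?thesis using qw by (simp add: mult_ac)
    qed
    have "(\<Sum>y\<in>UNIV. (if Q x * W x y > 0 then Q x * W x y * ln (W x y / out_dist Q W y) else 0)) \<le> (\<Sum>y\<in>UNIV. W x y * (Q x * ln (1 / Q x)))"
      by (rule sum_mono) (rule tm)
    also have "\<dots> = Q x * ln (1 / Q x)" using W1[of x] by (simp add: sum_distrib_right[symmetric])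
    also have "\<dots> \<le> Q x * (1 / Q x - 1)" using True by (intro mult_left_mono ln_le_minus_one) auto
    also have "\<dots> \<le> 1" using True by (simp add: algebra_simps)
    finally show ?thesis .
  qed
  have "mutual_info Q W \<le> (\<Sum>x\<in>(UNIV::'x set). 1)" unfolding mutual_info_def by (rule sum_mono) (rule row)
  then show ?thesis by simp
qed

lemma ESP_large:
  fixes W :: "'x::finite \<Rightarrow> 'y::finite \<Rightarrow> real"
  assumes W: "channel W" and R: "R \<ge> real CARD('x)"
  shows "E_SP W R \<le> 0"
  unfolding E_SP_def
proof (rule SUP_least)
  fix Q :: "'x \<Rightarrow> real" assume "Q \<in> {Q. pdist Q}"
  then have Q: "pdist Q" by simp
  have "(INF V\<in>{V. channel V \<and> mutual_info Q V \<le> R}. cond_div V W Q) \<le> cond_div W W Q"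
    by (rule INF_lower) (use W mi_le_card[OF W Q] R in auto)
  also have "cond_div W W Q = 0" unfolding cond_div_def by (intro sum.neutral ballI) (auto simp: zero_ereal_def)
  finally show "(INF V\<in>{V. channel V \<and> mutual_info Q V \<le> R}. cond_div V W Q) \<le> 0" .
qed

lemma Rinf_facts:
  fixes W :: "'x::finite \<Rightarrow> 'y::finite \<Rightarrow> real"
  assumes W: "channel W" and L: "\<And>x y. W x y > 0 \<Longrightarrow> ell W y \<ge> L" and R: "R_inf W < R"
  shows "E_SP W R \<noteq> \<infinity>" "L < R"
proof -
  define S where "S = {R. E_SP W R = \<infinity>}"
  have bdd: "bdd_above S"
  proof (rule bdd_aboveI[of _ "real CARD('x)"])
    fix R assume "R \<in> S"
    then have "E_SP W R = \<infinity>" unfolding S_def by simp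
    then show "R \<le> real CARD('x)" using ESP_large[OF W, of R] by (cases "R \<ge> real CARD('x)") auto
  qed
  show "E_SP W R \<noteq> \<infinity>"
  proof
    assume "E_SP W R = \<infinity>"
    then have "R \<in> S" unfolding S_def by simp
    then have "R \<le> Sup S" using bdd by (rule cSup_upper)
    then show False using R unfolding R_inf_def S_def by simp
  qed
  show "L < R"
  proof (rule ccontr)
    assume "\<not> L < R"
    define R' where "R' = (R_inf W + R) / 2"
    have "R' < L" using R \<open>\<not> L < R\<close> unfolding R'_def by simp
    then have "E_SP W R' = \<infinity>" using ESP_infty[where W=W and L=L and R'=R'] W L by blast
    then have "R' \<in> S" unfolding S_def by simp
    then have "R' \<le> Sup S" using bdd by (rule cSup_upper)
    then show False using R unfolding R_inf_def S_def R'_def by simp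
  qed
qed

lemma tilt:
  assumes Z: "Z \<noteq> 0"
  shows "(opr I p a ^^ N) G s = Z^N * exp (- \<theta> * s) * (opr I (\<lambda>i. p i * exp (- \<theta> * a i) / Z) a ^^ N) (\<lambda>t. exp (\<theta> * t) * G t) s"
proof (induction N arbitrary: s)
  case 0 then show ?case by (simp add: exp_minus field_simps)
next
  case (Suc N)
  let ?q = "\<lambda>i. p i * exp (- \<theta> * a i) / Z"
  let ?H = "(opr I ?q a ^^ N) (\<lambda>t. exp (\<theta> * t) * G t)"
  have e: "(opr I p a ^^ N) G = (\<lambda>t. Z^N * exp (- \<theta> * t) * ?H t)" using Suc by (simp add: fun_eq_iff)
  have "(opr I p a ^^ Suc N) G s = (\<Sum>i\<in>I. p i * (Z^N * exp (- \<theta> * (s + a i)) * ?H (s + a i)))"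
    unfolding funpow.simps(2) o_apply e opr_def ..
  also have "\<dots> = (\<Sum>i\<in>I. Z^Suc N * exp (- \<theta> * s) * (?q i * ?H (s + a i)))"
    using Z by (intro sum.cong refl) (simp add: exp_add[symmetric] algebra_simps)
  also have "\<dots> = Z^Suc N * exp (- \<theta> * s) * (opr I ?q a ^^ Suc N) (\<lambda>t. exp (\<theta> * t) * G t) s"
    by (simp add: opr_def sum_distrib_left)
  finally show ?case .
qed

lemma tilt_exists:
  fixes w l :: "'y::finite \<Rightarrow> real"
  assumes w0: "\<And>y. w y \<ge> 0" and y0: "w y0 > 0" "l y0 < R"
  shows "\<exists>\<theta>\<ge>0. (\<Sum>y\<in>UNIV. w y * exp (\<theta> * (R - l y)) * (l y - R)) \<le> 0 \<and>
     (\<theta> = 0 \<or> (\<Sum>y\<in>UNIV. w y * exp (\<theta> * (R - l y)) * (l y - R)) = 0)"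
proof -
  define gf where "gf \<theta> = (\<Sum>y\<in>UNIV. w y * exp (\<theta> * (R - l y)) * (l y - R))" for \<theta>
  show ?thesis
  proof (cases "gf 0 \<le> 0")
    case True
    then show ?thesis unfolding gf_def by (intro exI[of _ 0]) simp
  next
    case False
    define \<delta> where "\<delta> = R - l y0"
    have d0: "\<delta> > 0" unfolding \<delta>_def using y0 by simp
    define B where "B = (\<Sum>y\<in>UNIV. w y * \<bar>l y - R\<bar>)"
    have B0: "B \<ge> 0" unfolding B_def using w0 by (intro sum_nonneg) simp
    define t1 where "t1 = (B / (w y0 * \<delta>) + 1) / \<delta>"
    have t10: "t1 \<ge> 0" unfolding t1_def using B0 d0 y0 by simp
    have tm: "w y * exp (t1 * (R - l y)) * (l y - R) \<le> (if y = y0 then - w y0 * \<delta> * exp (t1 * \<delta>) - w y0 * \<bar>l y0 - R\<bar> else 0) + w y * \<bar>l y - R\<bar>" for y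
    proof (cases "y = y0")
      case True then show ?thesis unfolding \<delta>_def using y0 by (simp add: algebra_simps)
    next
      case False
      show ?thesis
      proof (cases "l y \<le> R")
        case True
        then have "w y * exp (t1 * (R - l y)) * (l y - R) \<le> 0" using w0[of y]
          by (simp add: mult_nonneg_nonpos)
        moreover have "w y * \<bar>l y - R\<bar> \<ge> 0" using w0[of y] by simp
        ultimately show ?thesis using False by simp
      next
        case gt: False
        have "exp (t1 * (R - l y)) \<le> 1" using gt t10 by (simp add: mult_nonneg_nonpos)
        then have "w y * exp (t1 * (R - l y)) * (l y - R) \<le> w y * 1 * (l y - R)"
          using gt w0[of y] by (intro mult_right_mono mult_left_mono) auto
        then show ?thesis using False gt by simp
      qed
    qed
    have "gf t1 \<le> (\<Sum>y\<in>UNIV. (if y = y0 then - w y0 * \<delta> * exp (t1 * \<delta>) - w y0 * \<bar>l y0 - R\<bar> else 0) + w y * \<bar>l y - R\<bar>)"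
      unfolding gf_def by (rule sum_mono) (rule tm)
    also have "\<dots> = - w y0 * \<delta> * exp (t1 * \<delta>) - w y0 * \<bar>l y0 - R\<bar> + B"
      unfolding B_def by (simp add: sum.distrib)
    also have "\<dots> < 0"
    proof -
      have "t1 * \<delta> = B / (w y0 * \<delta>) + 1" unfolding t1_def using d0 by simp
      then have "exp (t1 * \<delta>) > B / (w y0 * \<delta>)"
        using exp_ge_add_one_self[of "B / (w y0 * \<delta>) + 1"] by simp
      then have "w y0 * \<delta> * exp (t1 * \<delta>) > w y0 * \<delta> * (B / (w y0 * \<delta>))"
        using y0 d0 by (intro mult_strict_left_mono) auto
      also have "w y0 * \<delta> * (B / (w y0 * \<delta>)) = B" using y0 d0 by simp
      finally have "w y0 * \<delta> * exp (t1 * \<delta>) > B" .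
      moreover have "w y0 * \<bar>l y0 - R\<bar> \<ge> 0" using y0 by simp
      ultimately show ?thesis by linarith
    qed
    finally have g1: "gf t1 < 0" .
    have cont: "continuous_on {0..t1} gf" unfolding gf_def by (intro continuous_intros)
    obtain \<theta> where th: "\<theta> \<ge> 0" "\<theta> \<le> t1" "gf \<theta> = 0"
      using IVT2'[of gf t1 0 0, OF _ _ t10 cont] g1 False by auto
    then show ?thesis unfolding gf_def by (intro exI[of _ \<theta>]) auto
  qed
qed

lemma two_sides:
  fixes q l :: "'y::finite \<Rightarrow> real"
  assumes q0: "\<And>y. q y \<ge> 0" and q1: "(\<Sum>y\<in>UNIV. q y) = 1" and m: "m = (\<Sum>y\<in>UNIV. q y * l y)"
    and nd: "q y1 > 0" "q y2 > 0" "l y1 \<noteq> l y2"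
  shows "\<exists>i0 i1. q i0 > 0 \<and> q i1 > 0 \<and> l i0 < m \<and> m < l i1"
proof -
  have z: "(\<Sum>y\<in>UNIV. q y * (l y - m)) = 0"
    using q1 m by (simp add: algebra_simps sum_subtractf sum_distrib_right[symmetric])
  have lo: "\<exists>i0. q i0 > 0 \<and> l i0 < m"
  proof (rule ccontr)
    assume "\<not> ?thesis"
    then have ge: "\<forall>y. q y * (l y - m) \<ge> 0" using q0 by (metis less_eq_real_def mult_nonneg_nonneg not_le diff_ge_0_iff_ge mult_zero_left)
    then have "\<forall>y\<in>UNIV. q y * (l y - m) = 0" using z by (subst sum_nonneg_eq_0_iff[symmetric]) auto
    then have "q y1 * (l y1 - m) = 0" "q y2 * (l y2 - m) = 0" by auto
    then have "l y1 = m" "l y2 = m" using nd by auto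
    then show False using nd by simp
  qed
  have hi: "\<exists>i1. q i1 > 0 \<and> m < l i1"
  proof (rule ccontr)
    assume "\<not> ?thesis"
    then have ge: "\<forall>y. q y * (m - l y) \<ge> 0" using q0 by (metis less_eq_real_def mult_nonneg_nonneg not_le diff_ge_0_iff_ge mult_zero_left)
    have "(\<Sum>y\<in>UNIV. q y * (m - l y)) = (\<Sum>y\<in>UNIV. - (q y * (l y - m)))"
      by (intro sum.cong refl) (simp add: algebra_simps)
    then have z2: "(\<Sum>y\<in>UNIV. q y * (m - l y)) = 0" using z by (simp add: sum_negf)
    then have "\<forall>y\<in>UNIV. q y * (m - l y) = 0" using ge by (subst sum_nonneg_eq_0_iff[symmetric]) auto
    then have "q y1 * (m - l y1) = 0" "q y2 * (m - l y2) = 0" by auto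
    then have "l y1 = m" "l y2 = m" using nd by auto
    then show False using nd by simp
  qed
  show ?thesis using lo hi by blast
qed

lemma const_shift:
  assumes w1: "(\<Sum>y\<in>UNIV. w y) = 1" and c: "\<And>y. w y \<noteq> 0 \<Longrightarrow> l y = L"
  shows "(opr UNIV w l ^^ N) G s = G (s + real N * L)"
proof (induction N arbitrary: s)
  case 0 then show ?case by simp
next
  case (Suc N)
  have e: "(opr UNIV w l ^^ N) G = (\<lambda>t. G (t + real N * L))" using Suc by (simp add: fun_eq_iff)
  have "(opr UNIV w l ^^ Suc N) G s = (\<Sum>y\<in>UNIV. w y * G (s + l y + real N * L))"
    unfolding funpow.simps(2) o_apply e opr_def ..
  also have "\<dots> = (\<Sum>y\<in>UNIV. w y * G (s + L + real N * L))"
    by (intro sum.cong refl) (metis c mult_zero_left)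
  also have "\<dots> = G (s + real (Suc N) * L)" using w1 by (simp add: sum_distrib_right[symmetric] algebra_simps)
  finally show ?case .
qed

theorem lemma8:
  fixes W :: "'x::finite \<Rightarrow> 'y::finite \<Rightarrow> real"
    and R k :: real and x\<^sub>o :: 'x
  assumes "channel W" and "gallager_symmetric W" and "singular_channel W"
    and "R_cr W < capacity W"
    and "\<forall>y. \<exists>x. W x y > 0"
    and "R_inf W < R" and "R < capacity W"
    and "k > 0"
  shows "(\<forall>(\<psi> :: 'y list \<Rightarrow> 'x) (N :: nat) (r :: real). r > 0 \<longrightarrow>
            (\<Sum>ys\<in>Sset W N r. \<Prod>n<N. W (\<psi> (take n ys)) (ys ! n))
              = prob_const W N x\<^sub>o (Sset W N r))
       \<and> (\<exists>K>0. \<forall>\<^sub>F N in sequentially.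
            prob_const W N x\<^sub>o (Sset W N (R - k / real N))
              \<ge> K / sqrt (real N) * exp (- real N * real_of_ereal (E_SP W R))
            \<and> K / sqrt (real N) * exp (- real N * real_of_ereal (E_SP W R)) > 0)"
proof -
  note chW = assms(1)
  have indep: "(\<Sum>y\<in>UNIV. W x y * G (ell W y)) = (\<Sum>y\<in>UNIV. W x' y * G (ell W y))" for x x' G
    by (rule sym_indep[OF assms(2)])
  have P1: "\<forall>(\<psi> :: 'y list \<Rightarrow> 'x) (N :: nat) (r :: real). r > 0 \<longrightarrow>
            (\<Sum>ys\<in>Sset W N r. \<Prod>n<N. W (\<psi> (take n ys)) (ys ! n))
              = prob_const W N x\<^sub>o (Sset W N r)"
    using part_i[OF indep] by blast
  have P2: "\<exists>K>0. \<forall>\<^sub>F N in sequentially.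
            prob_const W N x\<^sub>o (Sset W N (R - k / real N))
              \<ge> K / sqrt (real N) * exp (- real N * real_of_ereal (E_SP W R))
            \<and> K / sqrt (real N) * exp (- real N * real_of_ereal (E_SP W R)) > 0"
  proof -
    define w where "w = W x\<^sub>o"
    have W0: "W x y \<ge> 0" for x y using chW unfolding channel_def pdist_def by simp
    have W1: "(\<Sum>y\<in>UNIV. W x y) = 1" for x using chW unfolding channel_def pdist_def by simp
    have w0: "w y \<ge> 0" for y unfolding w_def by (rule W0)
    have w1: "(\<Sum>y\<in>UNIV. w y) = 1" unfolding w_def by (rule W1)
    have "\<exists>y. w y > 0"
    proof (rule ccontr)
      assume "\<not> (\<exists>y. w y > 0)"
      then have "\<forall>y. w y = 0" using w0 by (metis less_eq_real_def)
      then show False using w1 by simp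
    qed
    define S where "S = ell W ` {y. w y > 0}"
    have Sfin: "finite S" unfolding S_def by simp
    have Sne: "S \<noteq> {}" unfolding S_def using \<open>\<exists>y. w y > 0\<close> by auto
    define L where "L = Min S"
    have "L \<in> S" unfolding L_def using Sfin Sne by (rule Min_in)
    then obtain y0 where y0: "w y0 > 0" "ell W y0 = L" unfolding S_def by auto
    have Lmin: "L \<le> ell W y" if "w y > 0" for y
      unfolding L_def using Sfin that unfolding S_def by (intro Min_le) auto
    have Lall: "ell W y \<ge> L" if "W x y > 0" for x y
    proof -
      let ?G = "\<lambda>t. if t = ell W y then 1 else (0::real)"
      have "W x y * ?G (ell W y) \<le> (\<Sum>y'\<in>UNIV. W x y' * ?G (ell W y'))"
        by (rule member_le_sum) (use W0 in auto)
      then have "(\<Sum>y'\<in>UNIV. w y' * ?G (ell W y')) > 0" using that indep[of x "?G" x\<^sub>o] unfolding w_def by simp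
      then have "\<exists>y'. w y' * ?G (ell W y') \<noteq> 0"
      proof (rule contrapos_pp)
        assume "\<not> (\<exists>y'. w y' * ?G (ell W y') \<noteq> 0)"
        then have "(\<Sum>y'\<in>UNIV. w y' * ?G (ell W y')) = 0" by (intro sum.neutral) blast
        then show "\<not> (\<Sum>y'\<in>UNIV. w y' * ?G (ell W y')) > 0" by simp
      qed
      then obtain y' where "w y' * ?G (ell W y') \<noteq> 0" by blast
      then have "w y' > 0" "ell W y' = ell W y" using w0[of y'] by (auto split: if_splits)
      then show ?thesis using Lmin by force
    qed
    have ESPfin: "E_SP W R \<noteq> \<infinity>" and LR: "L < R"
      using Rinf_facts[where W=W and L=L and R=R] chW Lall assms(6) by blast+
    define Zf where "Zf \<theta> = (\<Sum>y\<in>UNIV. w y * exp (- \<theta> * ell W y))" for \<theta>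
    have Zpos: "Zf \<theta> > 0" for \<theta>
    proof -
      have "w y0 * exp (- \<theta> * ell W y0) \<le> Zf \<theta>" unfolding Zf_def
        by (rule member_le_sum) (use w0 in auto)
      moreover have "w y0 * exp (- \<theta> * ell W y0) > 0" using y0 by simp
      ultimately show ?thesis by linarith
    qed
    have Zind: "(\<Sum>y\<in>UNIV. W x y * exp (- \<theta> * ell W y)) = Zf \<theta>" for x \<theta>
      unfolding Zf_def w_def using indep[of x "\<lambda>t. exp (- \<theta> * t)" x\<^sub>o] by simp
    have ereal_ge: "real_of_ereal (E_SP W R) \<ge> - \<theta> * R - ln (Zf \<theta>)" if th: "\<theta> \<ge> 0" for \<theta>
    proof -
      have ge: "E_SP W R \<ge> ereal (- \<theta> * R - ln (Zf \<theta>))"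
        by (rule ESP_lower[OF chW th Zind Zpos])
      then show ?thesis using ESPfin by (cases "E_SP W R") auto
    qed
    have prob: "prob_const W N x\<^sub>o (Sset W N (R - k / real N)) =
        (opr UNIV w (ell W) ^^ N) (\<lambda>t. if (1 / real N) * t \<le> R - k / real N then 1 else 0) 0" for N
      unfolding w_def by (rule prob_rep)
    have Fiff: "((1 / real N) * t \<le> R - k / real N) \<longleftrightarrow> t \<le> real N * R - k" if "N > 0" for N t
      using that by (simp add: field_simps)
    show ?thesis
    proof (cases "\<forall>y. w y \<noteq> 0 \<longrightarrow> ell W y = L")
      case True
      define N1 where "N1 = nat \<lceil>k / (R - L)\<rceil> + 1"
      have e0: "real_of_ereal (E_SP W R) \<ge> 0"
        using ereal_ge[of 0] w1 unfolding Zf_def by simp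
      have "\<forall>N\<ge>N1. prob_const W N x\<^sub>o (Sset W N (R - k / real N))
              \<ge> 1 / sqrt (real N) * exp (- real N * real_of_ereal (E_SP W R))
            \<and> 1 / sqrt (real N) * exp (- real N * real_of_ereal (E_SP W R)) > 0"
      proof (intro allI impI conjI)
        fix N assume N: "N \<ge> N1"
        have Np: "N > 0" using N unfolding N1_def by simp
        have "real N \<ge> k / (R - L)" using N unfolding N1_def by linarith
        then have "real N * (R - L) \<ge> k" using LR by (simp add: divide_le_eq)
        then have le: "0 + real N * L \<le> real N * R - k" by (simp add: algebra_simps)
        have cs: "(opr UNIV w (ell W) ^^ N) (\<lambda>t. if (1 / real N) * t \<le> R - k / real N then 1 else 0) 0
            = (\<lambda>t. if (1 / real N) * t \<le> R - k / real N then 1 else (0::real)) (0 + real N * L)"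
          by (rule const_shift[OF w1]) (use True in blast)
        have "prob_const W N x\<^sub>o (Sset W N (R - k / real N)) = 1"
          unfolding prob cs using Fiff[OF Np, of "0 + real N * L"] le by simp
        moreover have "1 / sqrt (real N) * exp (- real N * real_of_ereal (E_SP W R)) \<le> 1"
        proof -
          have "exp (- real N * real_of_ereal (E_SP W R)) \<le> 1" using e0 by simp
          moreover have "1 / sqrt (real N) \<le> 1" using Np by simp
          moreover have "1 / sqrt (real N) \<ge> 0" by simp
          moreover have "exp (- real N * real_of_ereal (E_SP W R)) \<ge> 0" by simp
          ultimately show ?thesis using mult_le_one by blast
        qed
        ultimately show "prob_const W N x\<^sub>o (Sset W N (R - k / real N))
              \<ge> 1 / sqrt (real N) * exp (- real N * real_of_ereal (E_SP W R))" by simp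
        show "1 / sqrt (real N) * exp (- real N * real_of_ereal (E_SP W R)) > 0" using Np by simp
      qed
      then show ?thesis unfolding eventually_sequentially by (intro exI[of _ 1]) auto
    next
      case False
      then obtain y1 where y1: "w y1 \<noteq> 0" "ell W y1 \<noteq> L" by blast
      obtain \<theta> where th: "\<theta> \<ge> 0" "(\<Sum>y\<in>UNIV. w y * exp (\<theta> * (R - ell W y)) * (ell W y - R)) \<le> 0"
        "\<theta> = 0 \<or> (\<Sum>y\<in>UNIV. w y * exp (\<theta> * (R - ell W y)) * (ell W y - R)) = 0"
        using tilt_exists[of w y0 "ell W" R] w0 y0 LR by auto
      define Z where "Z = Zf \<theta>"
      have Z0: "Z > 0" unfolding Z_def by (rule Zpos)
      define q where "q y = w y * exp (- \<theta> * ell W y) / Z" for y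
      define m' where "m' = (\<Sum>y\<in>UNIV. q y * ell W y)"
      have q0: "q y \<ge> 0" for y unfolding q_def using w0 Z0 by simp
      have q1: "(\<Sum>y\<in>UNIV. q y) = 1" unfolding q_def using Z0 unfolding Z_def Zf_def
        by (simp add: sum_divide_distrib[symmetric])
      have qpos: "q y > 0 \<longleftrightarrow> w y > 0" for y unfolding q_def using Z0 w0[of y]
        by (simp add: zero_less_mult_iff zero_less_divide_iff)
      have gfe: "(\<Sum>y\<in>UNIV. w y * exp (\<theta> * (R - ell W y)) * (ell W y - R)) = exp (\<theta> * R) * Z * (m' - R)"
      proof -
        have "(\<Sum>y\<in>UNIV. w y * exp (\<theta> * (R - ell W y)) * (ell W y - R)) = exp (\<theta> * R) * (\<Sum>y\<in>UNIV. w y * exp (- \<theta> * ell W y) * (ell W y - R))"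
          by (simp add: sum_distrib_left right_diff_distrib exp_diff exp_minus field_simps)
        also have "(\<Sum>y\<in>UNIV. w y * exp (- \<theta> * ell W y) * (ell W y - R)) = Z * (m' - R)"
        proof -
          have A: "(\<Sum>y\<in>UNIV. w y * exp (- \<theta> * ell W y) * (ell W y - R)) = (\<Sum>y\<in>UNIV. w y * exp (- \<theta> * ell W y) * ell W y) - R * Z"
            unfolding Z_def Zf_def by (simp add: sum_subtractf right_diff_distrib sum_distrib_left algebra_simps)
          have B: "Z * m' = (\<Sum>y\<in>UNIV. w y * exp (- \<theta> * ell W y) * ell W y)"
            unfolding m'_def q_def using Z0 by (simp add: sum_distrib_left)
          show ?thesis using A B by (simp add: algebra_simps)
        qed
        finally show ?thesis by simp
      qed
      have pp: "exp (\<theta> * R) * Z > 0" using Z0 by simp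
      have mR: "m' \<le> R" using th(2) gfe pp Z0 by (simp add: mult_le_0_iff)
      have thmR: "\<theta> * (R - m') = 0" using th(3) gfe pp by auto
      obtain i0 i1 where ii: "q i0 > 0" "q i1 > 0" "ell W i0 < m'" "m' < ell W i1"
        using two_sides[OF q0 q1 m'_def, of y0 y1] qpos y0 y1 w0[of y1] by (auto simp: less_le)
      obtain c N0 where c: "c > 0" and cN: "\<forall>N\<ge>N0. (opr UNIV q (ell W) ^^ N)
          (\<lambda>t. if real N * m' - k - (ell W i1 - ell W i0) \<le> t \<and> t \<le> real N * m' - k then 1 else 0) 0 \<ge> c / sqrt (real N)"
        using local_lb[of UNIV q m' "ell W" i0 i1 k] q0 q1 m'_def ii assms(8) by auto
      define gap where "gap = ell W i1 - ell W i0"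
      define K where "K = c * exp (- \<theta> * (k + gap))"
      have K0: "K > 0" unfolding K_def using c by simp
      have "\<forall>N\<ge>max N0 1. prob_const W N x\<^sub>o (Sset W N (R - k / real N))
              \<ge> K / sqrt (real N) * exp (- real N * real_of_ereal (E_SP W R))
            \<and> K / sqrt (real N) * exp (- real N * real_of_ereal (E_SP W R)) > 0"
      proof (intro allI impI conjI)
        fix N assume N: "N \<ge> max N0 1"
        have Np: "N > 0" using N by simp
        define F where "F t = (if (1 / real N) * t \<le> R - k / real N then 1 else (0::real))" for t
        define win where "win t = (if real N * m' - k - gap \<le> t \<and> t \<le> real N * m' - k then 1 else (0::real))" for t
        have qeq: "(\<lambda>y. w y * exp (- \<theta> * ell W y) / Z) = q" unfolding q_def ..
        have eq1: "prob_const W N x\<^sub>o (Sset W N (R - k / real N)) = Z^N * (opr UNIV q (ell W) ^^ N) (\<lambda>t. exp (\<theta> * t) * F t) 0"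
        proof -
          have "prob_const W N x\<^sub>o (Sset W N (R - k / real N)) = (opr UNIV w (ell W) ^^ N) F 0"
            unfolding prob F_def ..
          also have "\<dots> = Z^N * exp (- \<theta> * 0) * (opr UNIV q (ell W) ^^ N) (\<lambda>t. exp (\<theta> * t) * F t) 0"
            using tilt[where Z=Z and I=UNIV and p=w and a="ell W" and N=N and G=F and s=0 and \<theta>=\<theta>] Z0 unfolding qeq by simp
          finally show ?thesis by simp
        qed
        have ge1: "(opr UNIV q (ell W) ^^ N) (\<lambda>t. exp (\<theta> * t) * F t) 0 \<ge>
            (opr UNIV q (ell W) ^^ N) (\<lambda>t. exp (\<theta> * (real N * m' - k - gap)) * win t) 0"
        proof (rule oprpow_mono)
          show "\<forall>i\<in>UNIV. q i \<ge> 0" using q0 by simp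
          fix t
          show "exp (\<theta> * (real N * m' - k - gap)) * win t \<le> exp (\<theta> * t) * F t"
          proof (cases "real N * m' - k - gap \<le> t \<and> t \<le> real N * m' - k")
            case True
            have "t \<le> real N * R - k" using True mR Np by (smt (verit) mult_left_mono of_nat_0_le_iff)
            then have "F t = 1" unfolding F_def using Fiff[OF Np] by simp
            moreover have "exp (\<theta> * (real N * m' - k - gap)) \<le> exp (\<theta> * t)"
              using True th(1) by (simp add: mult_left_mono)
            ultimately show ?thesis using True unfolding win_def by simp
          next
            case False
            then have "win t = 0" unfolding win_def by auto
            moreover have "F t \<ge> 0" unfolding F_def by simp
            ultimately show ?thesis by simp
          qed
        qed
        have eq2: "(opr UNIV q (ell W) ^^ N) (\<lambda>t. exp (\<theta> * (real N * m' - k - gap)) * win t) 0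
            = exp (\<theta> * (real N * m' - k - gap)) * (opr UNIV q (ell W) ^^ N) win 0"
          by (rule oprpow_scale)
        have ge2: "(opr UNIV q (ell W) ^^ N) win 0 \<ge> c / sqrt (real N)"
        proof -
          have wineq: "win = (\<lambda>t. if real N * m' - k - (ell W i1 - ell W i0) \<le> t \<and> t \<le> real N * m' - k then 1 else 0)"
            by (simp add: fun_eq_iff win_def gap_def)
          have "N \<ge> N0" using N by simp
          then show ?thesis unfolding wineq using cN by blast
        qed
        have low: "prob_const W N x\<^sub>o (Sset W N (R - k / real N)) \<ge>
            Z^N * (exp (\<theta> * (real N * m' - k - gap)) * (c / sqrt (real N)))"
        proof -
          have "exp (\<theta> * (real N * m' - k - gap)) * (c / sqrt (real N)) \<le> exp (\<theta> * (real N * m' - k - gap)) * (opr UNIV q (ell W) ^^ N) win 0"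
            using ge2 by (intro mult_left_mono) auto
          also have "\<dots> \<le> (opr UNIV q (ell W) ^^ N) (\<lambda>t. exp (\<theta> * t) * F t) 0" using ge1 eq2 by simp
          finally have "Z^N * (exp (\<theta> * (real N * m' - k - gap)) * (c / sqrt (real N))) \<le> Z^N * (opr UNIV q (ell W) ^^ N) (\<lambda>t. exp (\<theta> * t) * F t) 0"
            using Z0 by (intro mult_left_mono) auto
          then show ?thesis using eq1 by simp
        qed
        have "Z^N * exp (\<theta> * (real N * m' - k - gap)) = exp (- real N * (- \<theta> * R - ln Z)) * exp (- \<theta> * (k + gap))"
        proof -
          have "Z^N = exp (real N * ln Z)" using Z0 by (simp add: exp_of_nat_mult)
          moreover have "\<theta> * (real N * m') = \<theta> * (real N * R)" using thmR by (auto simp: algebra_simps)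
          ultimately show ?thesis by (simp add: exp_add[symmetric] algebra_simps)
        qed
        moreover have "exp (- real N * (- \<theta> * R - ln Z)) \<ge> exp (- real N * real_of_ereal (E_SP W R))"
          using ereal_ge[OF th(1)] unfolding Z_def by (simp add: mult_left_mono)
        ultimately have "Z^N * exp (\<theta> * (real N * m' - k - gap)) * (c / sqrt (real N)) \<ge>
            exp (- real N * real_of_ereal (E_SP W R)) * exp (- \<theta> * (k + gap)) * (c / sqrt (real N))"
          using c by (intro mult_right_mono) auto
        then have "Z^N * (exp (\<theta> * (real N * m' - k - gap)) * (c / sqrt (real N))) \<ge>
            exp (- real N * real_of_ereal (E_SP W R)) * exp (- \<theta> * (k + gap)) * (c / sqrt (real N))" by (simp add: mult.assoc)
        moreover have "exp (- real N * real_of_ereal (E_SP W R)) * exp (- \<theta> * (k + gap)) * (c / sqrt (real N))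
            = K / sqrt (real N) * exp (- real N * real_of_ereal (E_SP W R))"
          unfolding K_def by simp
        ultimately show "prob_const W N x\<^sub>o (Sset W N (R - k / real N))
              \<ge> K / sqrt (real N) * exp (- real N * real_of_ereal (E_SP W R))" using low by linarith
        show "K / sqrt (real N) * exp (- real N * real_of_ereal (E_SP W R)) > 0" using K0 Np by simp
      qed
      then show ?thesis using K0 unfolding eventually_sequentially by blast
    qed
  qed
  show ?thesis using P1 P2 by blast
qed

end
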